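(* Let $k,n\in\mathbb{N}$ and let $\mathbf{E}$ be an ideal cipher, i.e. drawn uniformly from $\mathsf{Ics}(k,n)$. Let $\mathcal{A}$ be a quantum adversary that makes at most $p$ quantum queries in total to the ideal-cipher oracles $\mathbf{E},\mathbf{E}^{-1}$, and at most $q$ classical, non-adaptive queries in total to the construction oracles $\textsc{Ev},\textsc{Inv}$. Then \[\mathsf{Adv}^{\mathsf{sprp}\text{-}\mathsf{na}}_{\mathsf{FX}}(\mathcal{A})\le\sqrt{8p^2q/2^{k+n}}.\]
   Context: $\mathsf{Ics}(k,n)$ is the set of all functions $\mathbf{E}:\{0,1\}^k\times\{0,1\}^n\to\{0,1\}^n$ such that each $\mathbf{E}_K=\mathbf{E}(K,\cdot)$ is a permutation of $\{0,1\}^n$. Quantum access to $\mathbf{E}$ is the unitary $|K,x,y\rangle\mapsto|K,x,y\oplus\mathbf{E}_K(x)\rangle$, and similarly for $\mathbf{E}^{-1}$. The FX blockcipher with key $K_1\|K_2\in\{0,1\}^k\times\{0,1\}^n$ is $\mathsf{FX}[\mathbf{E}](K_1\|K_2,x)=\mathbf{E}_{K_1}(x\oplus K_2)\oplus K_2$. Its inverse is $\mathsf{FX}[\mathbf{E}]^{-1}(K_1\|K_2,y)=\mathbf{E}^{-1}_{K_1}(y\oplus K_2)\oplus K_2$. The SPRP game with bit $b\in\{0,1\}$ samples $\mathbf{E}$ uniformly from $\mathsf{Ics}(k,n)$, samples a uniform key $K_1\|K_2$, and samples an independent uniform permutation $P$ of $\{0,1\}^n$. The adversary gets quantum access to $\mathbf{E},\mathbf{E}^{-1}$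 and access to $\textsc{Ev},\textsc{Inv}$: - if $b=1$, $\textsc{Ev}$ returns $\mathsf{FX}[\mathbf{E}](K_1\|K_2,\cdot)$ and $\textsc{Inv}$ returns its inverse; - if $b=0$, $\textsc{Ev}$ returns $P$ and $\textsc{Inv}$ returns $P^{-1}$. The adversary outputs a bit. The advantage is $\Pr[\mathcal{A}\text{ outputs }1\mid b=1]-\Pr[\mathcal{A}\text{ outputs }1\mid b=0]$. Classical, non-adaptive queries means the following. There are fixed strings $M_1,\dots,M_{q'},Y_{q'+1},\dots,Y_q\in\{0,1\}^n$, determined before execution, such that $\mathcal{A}$ queries $\textsc{Ev}$ only on the $M_i$ and $\textsc{Inv}$ only on the $Y_i$. These queries are classical, i.e. not made in superposition. The advantage of such adversaries is denoted $\mathsf{Adv}^{\mathsf{sprp}\text{-}\mathsf{na}}_{\mathsf{FX}}$. *)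

theory Defs
  imports Complex_Main "HOL-Combinatorics.Permutations"
begin

text \<open>A bit string in {0,1}^n is encoded as a natural number below 2^n;
  the XOR of bit strings is bitwise xor on nat.\<close>

definition bits :: "nat \<Rightarrow> nat set" where
  "bits n = {..<2^n}"

text \<open>To obtain a finite set (so that uniform sampling makes sense) the
  functions are extensional: E K = id for out-of-range keys (and permutes forces
  E K x = x for out-of-range x).\<close>

definition Ics :: "nat \<Rightarrow> nat \<Rightarrow> (nat \<Rightarrow> nat \<Rightarrow> nat) set" where
  "Ics k n = {E. (\<forall>K. (K < 2^k \<longrightarrow> E K permutes bits n) \<and> (\<not> K < 2^k \<longrightarrow> E K = id))}"

definition Perms :: "nat \<Rightarrow> (nat \<Rightarrow> nat) set" where
  "Perms n = {P. P permutes bits n}"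

definition FX :: "(nat \<Rightarrow> nat \<Rightarrow> nat) \<Rightarrow> nat \<Rightarrow> nat \<Rightarrow> nat \<Rightarrow> nat" where
  "FX E K1 K2 x = xor (E K1 (xor x K2)) K2"

definition FX_inv :: "(nat \<Rightarrow> nat \<Rightarrow> nat) \<Rightarrow> nat \<Rightarrow> nat \<Rightarrow> nat \<Rightarrow> nat" where
  "FX_inv E K1 K2 y = xor (inv (E K1) (xor y K2)) K2"

text \<open>The adversary's computational basis consists of a key register K (k bits),
  an input register x (n bits), an output register y (n bits) and an arbitrary
  finite workspace 'w.  A state is an amplitude function on the basis; only
  amplitudes on valid basis states (registers in range) are ever used.\<close>

type_synonym 'w basis = "nat \<times> nat \<times> nat \<times> 'w"
type_synonym 'w qstate = "'w basis \<Rightarrow> complex"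

definition valid :: "nat \<Rightarrow> nat \<Rightarrow> 'w basis set" where
  "valid k n = {(K, x, y, w). K < 2^k \<and> x < 2^n \<and> y < 2^n}"

text \<open>Since the list of operations is fixed before execution, the
  classical queries are non-adaptive.\<close>

datatype 'w op =
    Unitary "'w basis \<Rightarrow> 'w basis \<Rightarrow> complex"
  | QueryE
  | QueryEinv
  | ClassEv nat
  | ClassInv nat

definition apply_mat :: "nat \<Rightarrow> nat \<Rightarrow> (('w::finite) basis \<Rightarrow> 'w basis \<Rightarrow> complex)
    \<Rightarrow> 'w qstate \<Rightarrow> 'w qstate" where
  "apply_mat k n U \<psi> = (\<lambda>b. \<Sum>b'\<in>valid k n. U b b' * \<psi> b')"

definition is_unitary :: "nat \<Rightarrow> nat \<Rightarrow> (('w::finite) basis \<Rightarrow> 'w basis \<Rightarrow> complex) \<Rightarrow> bool" where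
  "is_unitary k n U \<longleftrightarrow>
     (\<forall>a\<in>valid k n. \<forall>a'\<in>valid k n.
        (\<Sum>b\<in>valid k n. cnj (U b a) * U b a') = (if a = a' then 1 else 0)) \<and>
     (\<forall>a\<in>valid k n. \<forall>a'\<in>valid k n.
        (\<Sum>b\<in>valid k n. U a b * cnj (U a' b)) = (if a = a' then 1 else 0))"

definition apply_oracle :: "(nat \<Rightarrow> nat \<Rightarrow> nat) \<Rightarrow> 'w qstate \<Rightarrow> 'w qstate" where
  "apply_oracle f \<psi> = (\<lambda>(K, x, y, w). \<psi> (K, x, xor y (f K x), w))"

definition apply_const :: "nat \<Rightarrow> 'w qstate \<Rightarrow> 'w qstate" where
  "apply_const a \<psi> = (\<lambda>(K, x, y, w). \<psi> (K, x, xor y a, w))"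

fun step :: "nat \<Rightarrow> nat \<Rightarrow> (nat \<Rightarrow> nat \<Rightarrow> nat) \<Rightarrow> (nat \<Rightarrow> nat) \<Rightarrow> (nat \<Rightarrow> nat)
    \<Rightarrow> ('w::finite) op \<Rightarrow> 'w qstate \<Rightarrow> 'w qstate" where
  "step k n E Ev Inv (Unitary U) \<psi> = apply_mat k n U \<psi>"
| "step k n E Ev Inv QueryE \<psi> = apply_oracle E \<psi>"
| "step k n E Ev Inv QueryEinv \<psi> = apply_oracle (\<lambda>K. inv (E K)) \<psi>"
| "step k n E Ev Inv (ClassEv m) \<psi> = apply_const (Ev m) \<psi>"
| "step k n E Ev Inv (ClassInv y) \<psi> = apply_const (Inv y) \<psi>"

definition run :: "nat \<Rightarrow> nat \<Rightarrow> (nat \<Rightarrow> nat \<Rightarrow> nat) \<Rightarrow> (nat \<Rightarrow> nat) \<Rightarrow> (nat \<Rightarrow> nat)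
    \<Rightarrow> ('w::finite) op list \<Rightarrow> 'w qstate \<Rightarrow> 'w qstate" where
  "run k n E Ev Inv ops \<psi>0 = fold (step k n E Ev Inv) ops \<psi>0"

definition init_state :: "'w \<Rightarrow> 'w qstate" where
  "init_state w0 = (\<lambda>b. if b = (0, 0, 0, w0) then 1 else 0)"

definition accept_prob :: "nat \<Rightarrow> nat \<Rightarrow> (nat \<Rightarrow> nat \<Rightarrow> nat) \<Rightarrow> (nat \<Rightarrow> nat) \<Rightarrow> (nat \<Rightarrow> nat)
    \<Rightarrow> 'w \<Rightarrow> ('w::finite) op list \<Rightarrow> ('w basis \<Rightarrow> bool) \<Rightarrow> real" where
  "accept_prob k n E Ev Inv w0 ops acc =
     (\<Sum>b\<in>{b\<in>valid k n. acc b}. (cmod (run k n E Ev Inv ops (init_state w0) b))^2)"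

definition wf_adv :: "nat \<Rightarrow> nat \<Rightarrow> ('w::finite) op list \<Rightarrow> bool" where
  "wf_adv k n ops \<longleftrightarrow>
     (\<forall>c\<in>set ops. (\<forall>U. c = Unitary U \<longrightarrow> is_unitary k n U) \<and>
                  (\<forall>m. c = ClassEv m \<longrightarrow> m < 2^n) \<and>
                  (\<forall>y. c = ClassInv y \<longrightarrow> y < 2^n))"

definition num_quantum :: "'w op list \<Rightarrow> nat" where
  "num_quantum ops = length (filter (\<lambda>c. c = QueryE \<or> c = QueryEinv) ops)"

definition num_classical :: "'w op list \<Rightarrow> nat" where
  "num_classical ops = length (filter (\<lambda>c. case c of ClassEv _ \<Rightarrow> True | ClassInv _ \<Rightarrow> True | _ \<Rightarrow> False) ops)"

definition adv_sprp_na_FX :: "nat \<Rightarrow> nat \<Rightarrow> ('w::finite) \<Rightarrow> 'w op list \<Rightarrow> ('w basis \<Rightarrow> bool) \<Rightarrow> real" where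
  "adv_sprp_na_FX k n w0 ops acc =
     (\<Sum>E\<in>Ics k n. \<Sum>K1\<in>bits k. \<Sum>K2\<in>bits n.
        accept_prob k n E (FX E K1 K2) (FX_inv E K1 K2) w0 ops acc)
       / (real (card (Ics k n)) * 2^k * 2^n)
   - (\<Sum>E\<in>Ics k n. \<Sum>P\<in>Perms n.
        accept_prob k n E P (inv P) w0 ops acc)
       / (real (card (Ics k n)) * real (card (Perms n)))"

end

theory Submission
  imports Defs "HOL-Analysis.L2_Norm"
begin


lemma xor_lt: "(a::nat) < 2^n \<Longrightarrow> b < 2^n \<Longrightarrow> xor a b < 2^n"
proof -
  assume a: "a < 2^n" and b: "b < 2^n"
  have "take_bit n a = a" "take_bit n b = b" using a b by (simp_all add: take_bit_nat_eq_self_iff)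
  then have "xor a b = take_bit n (xor a b)" by (metis take_bit_xor)
  then show ?thesis by (metis take_bit_nat_less_exp)
qed

lemma xor_cancel[simp]: "xor (xor (a::nat) b) b = a"
  by (simp add: xor.assoc)

lemma xor_cancel2[simp]: "xor b (xor (a::nat) b) = a"
  by (metis xor.commute xor_cancel)

lemma valid_eq: "valid k n = {..<(2::nat)^k} \<times> {..<(2::nat)^n} \<times> {..<(2::nat)^n} \<times> (UNIV::'w set)"
  by (auto simp: valid_def)

lemma finite_valid[simp]: "finite (valid k n :: ('w::finite) basis set)"
  unfolding valid_eq by simp

definition nrm :: "nat \<Rightarrow> nat \<Rightarrow> ('w::finite) qstate \<Rightarrow> real" where
  "nrm k n \<psi> = L2_set (\<lambda>b. cmod (\<psi> b)) (valid k n)"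

definition osw :: "(nat \<Rightarrow> nat \<Rightarrow> nat) \<Rightarrow> 'w basis \<Rightarrow> 'w basis" where
  "osw f b = (case b of (K,x,y,w) \<Rightarrow> (K,x,xor y (f K x),w))"

lemma osw_invol: "osw f (osw f b) = b"
  by (auto simp: osw_def split: prod.splits)

lemma osw_valid: "\<forall>K x. K < 2^k \<longrightarrow> x < 2^n \<longrightarrow> f K x < 2^n \<Longrightarrow> b \<in> valid k n \<Longrightarrow> osw f b \<in> valid k n"
  by (auto simp: osw_def valid_def xor_lt split: prod.splits)

lemma sum_osw:
  assumes "\<forall>K x. K < 2^k \<longrightarrow> x < 2^n \<longrightarrow> f K x < 2^n"
  shows "(\<Sum>b\<in>valid k n. g (osw f b)) = (\<Sum>b\<in>valid k n. g b)"
  by (rule sum.reindex_bij_witness[where i="osw f" and j="osw f"])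
     (auto simp: osw_invol osw_valid[OF assms])

lemma apply_oracle_osw: "apply_oracle f \<psi> = (\<lambda>b. \<psi> (osw f b))"
  by (auto simp: apply_oracle_def osw_def fun_eq_iff split: prod.splits)

lemma apply_const_osw: "apply_const a \<psi> = (\<lambda>b. \<psi> (osw (\<lambda>_ _. a) b))"
  by (auto simp: apply_const_def osw_def fun_eq_iff split: prod.splits)

lemma nrm_osw:
  assumes "\<forall>K x. K < 2^k \<longrightarrow> x < 2^n \<longrightarrow> f K x < 2^n"
  shows "nrm k n (\<lambda>b. \<psi> (osw f b)) = nrm k n \<psi>"
  unfolding nrm_def L2_set_def using sum_osw[OF assms, of "\<lambda>b. (cmod (\<psi> b))^2"] by simp

lemma nrm_mat:
  fixes U :: "('w::finite) basis \<Rightarrow> 'w basis \<Rightarrow> complex"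
  assumes "is_unitary k n U"
  shows "nrm k n (apply_mat k n U \<psi>) = nrm k n \<psi>"
proof -
  let ?V = "valid k n :: 'w basis set"
  have u: "\<And>a a'. a \<in> ?V \<Longrightarrow> a' \<in> ?V \<Longrightarrow> (\<Sum>b\<in>?V. cnj (U b a) * U b a') = (if a = a' then 1 else 0)"
    using assms unfolding is_unitary_def by blast
  have "(\<Sum>b\<in>?V. (\<Sum>b'\<in>?V. U b b' * \<psi> b') * cnj (\<Sum>b''\<in>?V. U b b'' * \<psi> b''))
      = (\<Sum>b\<in>?V. \<Sum>b''\<in>?V. \<Sum>b'\<in>?V. (\<psi> b' * cnj (\<psi> b'')) * (cnj (U b b'') * U b b'))"
    by (simp add: sum_distrib_left sum_distrib_right algebra_simps)
  also have "\<dots> = (\<Sum>b''\<in>?V. \<Sum>b\<in>?V. \<Sum>b'\<in>?V. (\<psi> b' * cnj (\<psi> b'')) * (cnj (U b b'') * U b b'))"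
    by (rule sum.swap)
  also have "\<dots> = (\<Sum>b''\<in>?V. \<Sum>b'\<in>?V. \<Sum>b\<in>?V. (\<psi> b' * cnj (\<psi> b'')) * (cnj (U b b'') * U b b'))"
    by (intro sum.cong refl sum.swap)
  also have "\<dots> = (\<Sum>b''\<in>?V. \<Sum>b'\<in>?V. (\<psi> b' * cnj (\<psi> b'')) * (\<Sum>b\<in>?V. cnj (U b b'') * U b b'))"
    by (simp add: sum_distrib_left)
  also have "\<dots> = (\<Sum>b'\<in>?V. \<Sum>b''\<in>?V. (\<psi> b' * cnj (\<psi> b'')) * (\<Sum>b\<in>?V. cnj (U b b'') * U b b'))"
    by (rule sum.swap)
  also have "\<dots> = (\<Sum>b'\<in>?V. \<Sum>b''\<in>?V. (\<psi> b' * cnj (\<psi> b'')) * (if b'' = b' then 1 else 0))"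
    by (intro sum.cong refl) (simp add: u)
  also have "\<dots> = (\<Sum>b'\<in>?V. \<psi> b' * cnj (\<psi> b'))"
    by (simp add: if_distrib cong: if_cong)
  finally have eq: "(\<Sum>b\<in>?V. (\<Sum>b'\<in>?V. U b b' * \<psi> b') * cnj (\<Sum>b''\<in>?V. U b b'' * \<psi> b''))
      = (\<Sum>b'\<in>?V. \<psi> b' * cnj (\<psi> b'))" .
  have "complex_of_real (\<Sum>b\<in>?V. (cmod (apply_mat k n U \<psi> b))^2) = complex_of_real (\<Sum>b\<in>?V. (cmod (\<psi> b))^2)"
    unfolding of_real_sum complex_norm_square apply_mat_def using eq by simp
  then have "(\<Sum>b\<in>?V. (cmod (apply_mat k n U \<psi> b))^2) = (\<Sum>b\<in>?V. (cmod (\<psi> b))^2)"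
    using of_real_eq_iff by blast
  then show ?thesis unfolding nrm_def L2_set_def by simp
qed

lemma sq_sum_le: "((a::real) + b)^2 \<le> 2 * a^2 + 2 * b^2"
proof -
  have "0 \<le> (a - b)^2" by simp
  then show ?thesis by (simp add: power2_eq_square algebra_simps)
qed

definition good :: "nat \<Rightarrow> nat \<Rightarrow> (nat \<Rightarrow> nat \<Rightarrow> nat) \<Rightarrow> (nat \<Rightarrow> nat) \<Rightarrow> (nat \<Rightarrow> nat) \<Rightarrow> bool" where
  "good k n E Ev Inv \<longleftrightarrow> (\<forall>K x. K < 2^k \<longrightarrow> x < 2^n \<longrightarrow> E K x < 2^n \<and> inv (E K) x < 2^n)
      \<and> (\<forall>m. m < 2^n \<longrightarrow> Ev m < 2^n \<and> Inv m < 2^n)"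

definition wfop :: "nat \<Rightarrow> nat \<Rightarrow> ('w::finite) op \<Rightarrow> bool" where
  "wfop k n c \<longleftrightarrow> (\<forall>U. c = Unitary U \<longrightarrow> is_unitary k n U) \<and>
                  (\<forall>m. c = ClassEv m \<longrightarrow> m < 2^n) \<and> (\<forall>y. c = ClassInv y \<longrightarrow> y < 2^n)"

lemma wf_adv_wfop: "wf_adv k n ops \<longleftrightarrow> (\<forall>c\<in>set ops. wfop k n c)"
  by (simp add: wf_adv_def wfop_def)


lemma nrm_step:
  assumes "good k n E Ev Inv" "wfop k n c"
  shows "nrm k n (step k n E Ev Inv c \<psi>) = nrm k n \<psi>"
  using assms
  by (cases c) (auto simp: wfop_def good_def nrm_mat apply_oracle_osw apply_const_osw intro!: nrm_osw)

lemma step_lin: "step k n E Ev Inv c (\<lambda>b. \<psi> b - \<phi> b) = (\<lambda>b. step k n E Ev Inv c \<psi> b - step k n E Ev Inv c \<phi> b)"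
  by (cases c) (auto simp: apply_mat_def sum_subtractf right_diff_distrib apply_oracle_osw apply_const_osw)


lemma nrm_triangle: "nrm k n (\<lambda>b. f b + g b) \<le> nrm k n f + nrm k n g"
proof -
  have "nrm k n (\<lambda>b. f b + g b) \<le> L2_set (\<lambda>b. cmod (f b) + cmod (g b)) (valid k n)"
    unfolding nrm_def by (rule L2_set_mono) (auto simp: norm_triangle_ineq)
  also have "\<dots> \<le> nrm k n f + nrm k n g" unfolding nrm_def by (rule L2_set_triangle_ineq)
  finally show ?thesis .
qed

lemma nrm_zero: "nrm k n (\<lambda>b. 0) = 0"
  by (simp add: nrm_def L2_set_def)

lemma nrm_nonneg: "0 \<le> nrm k n f" by (simp add: nrm_def)

definition mass :: "nat \<Rightarrow> nat \<Rightarrow> (nat \<Rightarrow> nat \<Rightarrow> bool) \<Rightarrow> ('w::finite) qstate \<Rightarrow> real" where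
  "mass k n D \<phi> = (\<Sum>b\<in>valid k n. if D (fst b) (fst (snd b)) then (cmod (\<phi> b))^2 else 0)"

lemma mass_nonneg: "0 \<le> mass k n D \<phi>"
  unfolding mass_def by (intro sum_nonneg) auto

lemma osw_fst[simp]: "fst (osw f b) = fst b" "fst (snd (osw f b)) = fst (snd b)"
  by (auto simp: osw_def split: prod.splits)

lemma oracle_diff:
  fixes \<phi> :: "('w::finite) qstate"
  assumes f: "\<forall>K x. K < 2^k \<longrightarrow> x < 2^n \<longrightarrow> f K x < 2^n"
    and f': "\<forall>K x. K < 2^k \<longrightarrow> x < 2^n \<longrightarrow> f' K x < 2^n"
  shows "nrm k n (\<lambda>b. \<phi> (osw f' b) - \<phi> (osw f b)) \<le> 2 * sqrt (mass k n (\<lambda>K x. f' K x \<noteq> f K x) \<phi>)"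
proof -
  let ?V = "valid k n :: 'w basis set"
  let ?D = "\<lambda>b::'w basis. f' (fst b) (fst (snd b)) \<noteq> f (fst b) (fst (snd b))"
  let ?g = "\<lambda>b::'w basis. if ?D b then (cmod (\<phi> b))^2 else 0"
  have pt: "(cmod (\<phi> (osw f' b) - \<phi> (osw f b)))^2 \<le> 2 * ?g (osw f' b) + 2 * ?g (osw f b)" for b
  proof (cases "?D b")
    case True
    have "cmod (\<phi> (osw f' b) - \<phi> (osw f b)) \<le> cmod (\<phi> (osw f' b)) + cmod (\<phi> (osw f b))"
      by (rule norm_triangle_ineq4)
    then have "(cmod (\<phi> (osw f' b) - \<phi> (osw f b)))^2 \<le> (cmod (\<phi> (osw f' b)) + cmod (\<phi> (osw f b)))^2"
      by (simp add: power_mono)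
    also have "\<dots> \<le> 2 * (cmod (\<phi> (osw f' b)))^2 + 2 * (cmod (\<phi> (osw f b)))^2"
      by (rule sq_sum_le)
    finally show ?thesis using True by simp
  next
    case False
    then have "osw f' b = osw f b" by (auto simp: osw_def split: prod.splits)
    then show ?thesis by simp
  qed
  have "(nrm k n (\<lambda>b. \<phi> (osw f' b) - \<phi> (osw f b)))^2 = (\<Sum>b\<in>?V. (cmod (\<phi> (osw f' b) - \<phi> (osw f b)))^2)"
    unfolding nrm_def L2_set_def by (simp add: sum_nonneg)
  also have "\<dots> \<le> (\<Sum>b\<in>?V. 2 * ?g (osw f' b) + 2 * ?g (osw f b))"
    by (rule sum_mono) (rule pt)
  also have "\<dots> = 2 * (\<Sum>b\<in>?V. ?g (osw f' b)) + 2 * (\<Sum>b\<in>?V. ?g (osw f b))"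
    by (simp add: sum.distrib sum_distrib_left)
  also have "\<dots> = 4 * mass k n (\<lambda>K x. f' K x \<noteq> f K x) \<phi>"
    unfolding sum_osw[OF f', of ?g] sum_osw[OF f, of ?g] mass_def by simp
  finally have "(nrm k n (\<lambda>b. \<phi> (osw f' b) - \<phi> (osw f b)))^2 \<le> (2 * sqrt (mass k n (\<lambda>K x. f' K x \<noteq> f K x) \<phi>))^2"
    using mass_nonneg[of k n "\<lambda>K x. f' K x \<noteq> f K x" \<phi>] by (simp add: power_mult_distrib)
  then show ?thesis by (rule power2_le_imp_le) (simp add: mass_nonneg)
qed


definition dq :: "nat \<Rightarrow> nat \<Rightarrow> (nat \<Rightarrow> nat \<Rightarrow> nat) \<Rightarrow> (nat \<Rightarrow> nat \<Rightarrow> nat) \<Rightarrow> ('w::finite) op \<Rightarrow> 'w qstate \<Rightarrow> real" where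
  "dq k n E E' c \<phi> = (case c of QueryE \<Rightarrow> 2 * sqrt (mass k n (\<lambda>K x. E' K x \<noteq> E K x) \<phi>)
      | QueryEinv \<Rightarrow> 2 * sqrt (mass k n (\<lambda>K x. inv (E' K) x \<noteq> inv (E K) x) \<phi>)
      | _ \<Rightarrow> 0)"

primrec Bnd :: "nat \<Rightarrow> nat \<Rightarrow> (nat \<Rightarrow> nat \<Rightarrow> nat) \<Rightarrow> (nat \<Rightarrow> nat \<Rightarrow> nat) \<Rightarrow> (nat \<Rightarrow> nat) \<Rightarrow> (nat \<Rightarrow> nat)
    \<Rightarrow> ('w::finite) op list \<Rightarrow> 'w qstate \<Rightarrow> real" where
  "Bnd k n E E' Ev Inv [] \<phi> = 0"
| "Bnd k n E E' Ev Inv (c # cs) \<phi> = dq k n E E' c \<phi> + Bnd k n E E' Ev Inv cs (step k n E Ev Inv c \<phi>)"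

lemma step_diff:
  assumes "good k n E Ev Inv" "good k n E' Ev Inv"
  shows "nrm k n (\<lambda>b. step k n E' Ev Inv c \<phi> b - step k n E Ev Inv c \<phi> b) \<le> dq k n E E' c \<phi>"
proof (cases c)
  case QueryE
  have f: "\<forall>K x. K < 2^k \<longrightarrow> x < 2^n \<longrightarrow> E K x < 2^n" "\<forall>K x. K < 2^k \<longrightarrow> x < 2^n \<longrightarrow> E' K x < 2^n"
    using assms by (auto simp: good_def)
  show ?thesis using oracle_diff[OF f(1) f(2), of \<phi>] QueryE by (simp add: dq_def apply_oracle_osw)
next
  case QueryEinv
  have f: "\<forall>K x. K < 2^k \<longrightarrow> x < 2^n \<longrightarrow> inv (E K) x < 2^n" "\<forall>K x. K < 2^k \<longrightarrow> x < 2^n \<longrightarrow> inv (E' K) x < 2^n"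
    using assms by (auto simp: good_def)
  show ?thesis using oracle_diff[OF f(1) f(2), of \<phi>] QueryEinv by (simp add: dq_def apply_oracle_osw)
qed (auto simp: dq_def nrm_zero)


lemma hybrid:
  assumes "good k n E Ev Inv" "good k n E' Ev Inv" "\<forall>c\<in>set ops. wfop k n c"
  shows "nrm k n (\<lambda>b. run k n E' Ev Inv ops \<psi> b - run k n E Ev Inv ops \<phi> b)
           \<le> nrm k n (\<lambda>b. \<psi> b - \<phi> b) + Bnd k n E E' Ev Inv ops \<phi>"
  using assms(3)
proof (induction ops arbitrary: \<psi> \<phi>)
  case Nil
  then show ?case by (simp add: run_def)
next
  case (Cons c cs)
  let ?s' = "step k n E' Ev Inv c" and ?s = "step k n E Ev Inv c"
  have wc: "wfop k n c" using Cons.prems by simp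
  have "nrm k n (\<lambda>b. run k n E' Ev Inv (c#cs) \<psi> b - run k n E Ev Inv (c#cs) \<phi> b)
      = nrm k n (\<lambda>b. run k n E' Ev Inv cs (?s' \<psi>) b - run k n E Ev Inv cs (?s \<phi>) b)"
    by (simp add: run_def)
  also have "\<dots> \<le> nrm k n (\<lambda>b. ?s' \<psi> b - ?s \<phi> b) + Bnd k n E E' Ev Inv cs (?s \<phi>)"
    by (rule Cons.IH) (use Cons.prems in auto)
  also have "nrm k n (\<lambda>b. ?s' \<psi> b - ?s \<phi> b) \<le> nrm k n (\<lambda>b. ?s' \<psi> b - ?s' \<phi> b) + nrm k n (\<lambda>b. ?s' \<phi> b - ?s \<phi> b)"
    using nrm_triangle[of k n "\<lambda>b. ?s' \<psi> b - ?s' \<phi> b" "\<lambda>b. ?s' \<phi> b - ?s \<phi> b"] by simp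
  also have "(\<lambda>b. ?s' \<psi> b - ?s' \<phi> b) = ?s' (\<lambda>b. \<psi> b - \<phi> b)"
    by (simp add: step_lin)
  also have "nrm k n (?s' (\<lambda>b. \<psi> b - \<phi> b)) = nrm k n (\<lambda>b. \<psi> b - \<phi> b)"
    by (rule nrm_step[OF assms(2) wc])
  also have "nrm k n (\<lambda>b. ?s' \<phi> b - ?s \<phi> b) \<le> dq k n E E' c \<phi>"
    by (rule step_diff[OF assms(1,2)])
  finally show ?case by simp
qed


lemma sq_sum_le': "((a::real) + b)^2 \<le> 2 * a^2 + 2 * b^2"
proof -
  have "0 \<le> (a - b)^2" by simp
  then show ?thesis by (simp add: power2_eq_square algebra_simps)
qed

lemma prod_le_sq: "2 * ((a::real) * b) \<le> a^2 + b^2"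
proof -
  have "0 \<le> (a - b)^2" by simp
  then show ?thesis by (simp add: power2_eq_square algebra_simps)
qed

lemma acc_real_ineq:
  fixes s t s' t' u v :: real
  assumes "0 \<le> s" "0 \<le> t" "0 \<le> s'" "0 \<le> t'" "0 \<le> u" "0 \<le> v"
    "s^2 + s'^2 = 1" "t^2 + t'^2 = 1" "\<bar>s - t\<bar> \<le> u" "\<bar>s' - t'\<bar> \<le> v"
  shows "s^2 - t^2 \<le> sqrt (u^2 + v^2)"
proof -
  have e1: "s^2 - t^2 = (s - t) * (s + t)" by (simp add: power2_eq_square algebra_simps)
  have d1: "\<bar>s^2 - t^2\<bar> = \<bar>s - t\<bar> * (s + t)" unfolding e1 abs_mult using assms by simp
  have e2: "s^2 - t^2 = (t' - s') * (t' + s')" using assms by (simp add: power2_eq_square algebra_simps)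
  have d2: "\<bar>s^2 - t^2\<bar> = \<bar>s' - t'\<bar> * (s' + t')" unfolding e2 abs_mult using assms by (simp add: abs_minus_commute add.commute)
  have "(s^2 - t^2)^2 = \<bar>s^2 - t^2\<bar> * \<bar>s^2 - t^2\<bar>" by (simp add: power2_eq_square)
  also have "\<dots> = (\<bar>s - t\<bar> * (s + t)) * (\<bar>s' - t'\<bar> * (s' + t'))"
    using d1 d2 by metis
  also have "\<dots> = (\<bar>s - t\<bar> * \<bar>s' - t'\<bar>) * ((s + t) * (s' + t'))"
    by (simp add: algebra_simps)
  also have "\<dots> \<le> (u * v) * 2"
  proof (rule mult_mono)
    show "\<bar>s - t\<bar> * \<bar>s' - t'\<bar> \<le> u * v" using assms by (simp add: mult_mono)
    have "2 * ((s + t) * (s' + t')) \<le> (s + t)^2 + (s' + t')^2" by (rule prod_le_sq)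
    also have "\<dots> \<le> (2 * s^2 + 2 * t^2) + (2 * s'^2 + 2 * t'^2)"
      by (intro add_mono sq_sum_le')
    also have "\<dots> = 4" using assms(7,8) by simp
    finally show "(s + t) * (s' + t') \<le> 2" by simp
  qed (use assms in auto)
  also have "\<dots> \<le> u^2 + v^2" using prod_le_sq[of u v] by simp
  finally have "(s^2 - t^2)^2 \<le> u^2 + v^2" .
  then have "\<bar>s^2 - t^2\<bar> \<le> sqrt (u^2 + v^2)" by (metis real_sqrt_abs real_sqrt_le_mono)
  then show ?thesis by simp
qed


lemma L2sq: "finite A \<Longrightarrow> (L2_set f A)^2 = (\<Sum>i\<in>A. (f i)^2)"
  by (simp add: L2_set_def sum_nonneg)

lemma sum_split_pred: "finite V \<Longrightarrow> sum g V = sum g {b\<in>V. P b} + sum g {b\<in>V. \<not> P b}"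
proof -
  assume "finite V"
  moreover have "V = {b\<in>V. P b} \<union> {b\<in>V. \<not> P b}" by auto
  ultimately show ?thesis
    by (metis (no_types, lifting) sum.union_disjoint finite_Un disjoint_iff mem_Collect_eq)
qed

lemma L2_diff_le:
  "L2_set (\<lambda>b. cmod (\<psi> b)) A \<le> L2_set (\<lambda>b. cmod (\<psi> b - \<phi> b)) A + L2_set (\<lambda>b. cmod (\<phi> b)) A"
proof -
  have "L2_set (\<lambda>b. cmod (\<psi> b)) A \<le> L2_set (\<lambda>b. cmod (\<psi> b - \<phi> b) + cmod (\<phi> b)) A"
    by (rule L2_set_mono) (auto, metis norm_triangle_sub add.commute)
  also have "\<dots> \<le> L2_set (\<lambda>b. cmod (\<psi> b - \<phi> b)) A + L2_set (\<lambda>b. cmod (\<phi> b)) A"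
    by (rule L2_set_triangle_ineq)
  finally show ?thesis .
qed

lemma acc_diff:
  fixes \<psi> \<phi> :: "('w::finite) qstate"
  assumes "nrm k n \<psi> = 1" "nrm k n \<phi> = 1"
  shows "(\<Sum>b\<in>{b\<in>valid k n. acc b}. (cmod (\<psi> b))^2) - (\<Sum>b\<in>{b\<in>valid k n. acc b}. (cmod (\<phi> b))^2)
           \<le> nrm k n (\<lambda>b. \<psi> b - \<phi> b)"
proof -
  define V where "V = (valid k n :: 'w basis set)"
  define V1 where "V1 = {b\<in>V. acc b}"
  define V0 where "V0 = {b\<in>V. \<not> acc b}"
  define s where "s = L2_set (\<lambda>b. cmod (\<psi> b)) V1"
  define t where "t = L2_set (\<lambda>b. cmod (\<phi> b)) V1"
  define s' where "s' = L2_set (\<lambda>b. cmod (\<psi> b)) V0"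
  define t' where "t' = L2_set (\<lambda>b. cmod (\<phi> b)) V0"
  define u where "u = L2_set (\<lambda>b. cmod (\<psi> b - \<phi> b)) V1"
  define v where "v = L2_set (\<lambda>b. cmod (\<psi> b - \<phi> b)) V0"
  have finV: "finite V" unfolding V_def by simp
  have fin: "finite V1" "finite V0" using finV unfolding V1_def V0_def by auto
  have split: "(L2_set f V)^2 = (L2_set f V1)^2 + (L2_set f V0)^2" for f :: "'w basis \<Rightarrow> real"
  proof -
    have "(L2_set f V)^2 = (\<Sum>i\<in>V. (f i)^2)" by (rule L2sq) (rule finV)
    also have "\<dots> = (\<Sum>i\<in>V1. (f i)^2) + (\<Sum>i\<in>V0. (f i)^2)" unfolding V1_def V0_def by (rule sum_split_pred) (rule finV)
    also have "\<dots> = (L2_set f V1)^2 + (L2_set f V0)^2" by (simp add: L2sq fin)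
    finally show ?thesis .
  qed
  have "s^2 + s'^2 = 1" using split[of "\<lambda>b. cmod (\<psi> b)"] assms(1) unfolding s_def s'_def nrm_def V_def by simp
  moreover have "t^2 + t'^2 = 1" using split[of "\<lambda>b. cmod (\<phi> b)"] assms(2) unfolding t_def t'_def nrm_def V_def by simp
  moreover have "\<bar>s - t\<bar> \<le> u"
    using L2_diff_le[of \<psi> V1 \<phi>] L2_diff_le[of \<phi> V1 \<psi>] unfolding s_def t_def u_def
    by (simp add: norm_minus_commute)
  moreover have "\<bar>s' - t'\<bar> \<le> v"
    using L2_diff_le[of \<psi> V0 \<phi>] L2_diff_le[of \<phi> V0 \<psi>] unfolding s'_def t'_def v_def
    by (simp add: norm_minus_commute)
  ultimately have "s^2 - t^2 \<le> sqrt (u^2 + v^2)"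
    by (intro acc_real_ineq) (auto simp: s_def t_def s'_def t'_def u_def v_def)
  also have "sqrt (u^2 + v^2) = nrm k n (\<lambda>b. \<psi> b - \<phi> b)"
    using split[of "\<lambda>b. cmod (\<psi> b - \<phi> b)"] unfolding u_def v_def nrm_def V_def
    by (metis L2_set_nonneg real_sqrt_abs abs_of_nonneg)
  finally have fin_ineq: "s^2 - t^2 \<le> nrm k n (\<lambda>b. \<psi> b - \<phi> b)" .
  have "s^2 = (\<Sum>b\<in>V1. (cmod (\<psi> b))^2)" "t^2 = (\<Sum>b\<in>V1. (cmod (\<phi> b))^2)"
    unfolding s_def t_def by (simp_all add: L2sq fin)
  then show ?thesis using fin_ineq unfolding V1_def V_def by simp
qed


definition fixstep :: "nat \<times> nat \<Rightarrow> (nat \<Rightarrow> nat) \<Rightarrow> (nat \<Rightarrow> nat)" where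
  "fixstep z \<tau> = Transposition.transpose (snd z) (\<tau> (fst z)) \<circ> \<tau>"

definition Fix :: "(nat \<times> nat) list \<Rightarrow> (nat \<Rightarrow> nat) \<Rightarrow> (nat \<Rightarrow> nat)" where
  "Fix L \<sigma> = fold fixstep L \<sigma>"

definition sat :: "(nat \<times> nat) list \<Rightarrow> (nat \<Rightarrow> nat) \<Rightarrow> bool" where
  "sat L \<rho> \<longleftrightarrow> (\<forall>z\<in>set L. \<rho> (fst z) = snd z)"

definition CL :: "nat \<Rightarrow> (nat \<times> nat) list \<Rightarrow> (nat \<Rightarrow> nat) set" where
  "CL n L = {\<rho>. \<rho> permutes bits n \<and> sat L \<rho>}"

definition inb :: "nat \<Rightarrow> (nat \<times> nat) list \<Rightarrow> bool" where
  "inb n L \<longleftrightarrow> (\<forall>z\<in>set L. fst z \<in> bits n \<and> snd z \<in> bits n)"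

lemma Fix_Nil[simp]: "Fix [] \<sigma> = \<sigma>" by (simp add: Fix_def)
lemma Fix_Cons: "Fix (z # L) \<sigma> = Fix L (fixstep z \<sigma>)" by (simp add: Fix_def)
lemma Fix_snoc: "Fix (L @ [z]) \<sigma> = fixstep z (Fix L \<sigma>)" by (simp add: Fix_def)

lemma fixstep_permutes:
  assumes "\<tau> permutes bits n" "fst z \<in> bits n" "snd z \<in> bits n"
  shows "fixstep z \<tau> permutes bits n"
  unfolding fixstep_def
  by (rule permutes_compose[OF assms(1)])
     (rule permutes_swap_id, use assms in \<open>auto simp: permutes_in_image\<close>)

lemma Fix_permutes: "inb n L \<Longrightarrow> \<sigma> permutes bits n \<Longrightarrow> Fix L \<sigma> permutes bits n"
proof (induction L arbitrary: \<sigma>)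
  case Nil then show ?case by simp
next
  case (Cons z L)
  then show ?case unfolding Fix_Cons by (intro Cons.IH fixstep_permutes) (auto simp: inb_def)
qed

lemma Fix_support:
  "\<exists>\<pi>. \<pi> permutes (snd ` set L \<union> \<sigma> ` fst ` set L) \<and> Fix L \<sigma> = \<pi> \<circ> \<sigma>"
proof (induction L arbitrary: \<sigma>)
  case Nil then show ?case by (auto intro: exI[of _ id])
next
  case (Cons z L)
  obtain x y where z: "z = (x, y)" by force
  define \<tau> where "\<tau> = fixstep z \<sigma>"
  obtain \<pi>' where \<pi>': "\<pi>' permutes (snd ` set L \<union> \<tau> ` fst ` set L)" "Fix L \<tau> = \<pi>' \<circ> \<tau>"
    using Cons.IH by blast
  define S where "S = snd ` set (z # L) \<union> \<sigma> ` fst ` set (z # L)"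
  have "snd ` set L \<union> \<tau> ` fst ` set L \<subseteq> S"
  proof -
    have "\<tau> u \<in> S" if "u \<in> fst ` set L" for u
    proof -
      have "\<tau> u \<in> {y, \<sigma> x, \<sigma> u}" unfolding \<tau>_def fixstep_def z
        by (auto simp: transpose_def)
      then show ?thesis using that unfolding S_def z by auto
    qed
    then show ?thesis unfolding S_def by auto
  qed
  then have p1: "\<pi>' permutes S" using \<pi>'(1) permutes_subset by blast
  have p2: "Transposition.transpose y (\<sigma> x) permutes S"
    by (rule permutes_swap_id) (auto simp: S_def z)
  show ?case
  proof (intro exI conjI)
    show "\<pi>' \<circ> Transposition.transpose y (\<sigma> x) permutes (snd ` set (z # L) \<union> \<sigma> ` fst ` set (z # L))"
      using permutes_compose[OF p2 p1] unfolding S_def .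
    show "Fix (z # L) \<sigma> = \<pi>' \<circ> Transposition.transpose y (\<sigma> x) \<circ> \<sigma>"
      unfolding Fix_Cons \<tau>_def[symmetric] \<pi>'(2) by (simp add: \<tau>_def fixstep_def z o_assoc)
  qed
qed

lemma Fix_sat:
  assumes "inb n L" "\<rho>0 permutes bits n" "sat L \<rho>0" "\<sigma> permutes bits n"
  shows "sat L (Fix L \<sigma>)"
  using assms
proof (induction L arbitrary: \<sigma>)
  case Nil then show ?case by (simp add: sat_def)
next
  case (Cons z L)
  obtain x y where z: "z = (x, y)" by force
  define \<tau> where "\<tau> = fixstep z \<sigma>"
  have \<tau>p: "\<tau> permutes bits n" unfolding \<tau>_def
    by (rule fixstep_permutes) (use Cons.prems in \<open>auto simp: inb_def\<close>)
  have \<tau>x: "\<tau> x = y" unfolding \<tau>_def fixstep_def z by simp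
  have IH: "sat L (Fix L \<tau>)"
    by (rule Cons.IH) (use Cons.prems \<tau>p in \<open>auto simp: inb_def sat_def\<close>)
  have "Fix L \<tau> x = y"
  proof (cases "x \<in> fst ` set L")
    case True
    then obtain y' where y': "(x, y') \<in> set L" by force
    have "\<rho>0 x = y'" "\<rho>0 x = y" using Cons.prems(3) y' z by (auto simp: sat_def)
    then show ?thesis using IH y' by (auto simp: sat_def)
  next
    case False
    have yn: "y \<notin> snd ` set L"
    proof
      assume "y \<in> snd ` set L"
      then obtain x' where x': "(x', y) \<in> set L" by force
      have "\<rho>0 x' = y" "\<rho>0 x = y" using Cons.prems(3) x' z by (auto simp: sat_def)
      then have "x' = x" using permutes_inj[OF Cons.prems(2)] by (auto dest: injD)
      then show False using False x' by force
    qed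
    have yn2: "y \<notin> \<tau> ` fst ` set L"
    proof
      assume "y \<in> \<tau> ` fst ` set L"
      then obtain u where "u \<in> fst ` set L" "\<tau> u = y" by auto
      then have "u = x" using \<tau>x permutes_inj[OF \<tau>p] by (auto dest: injD)
      then show False using False \<open>u \<in> fst ` set L\<close> by simp
    qed
    obtain \<pi> where \<pi>: "\<pi> permutes (snd ` set L \<union> \<tau> ` fst ` set L)" "Fix L \<tau> = \<pi> \<circ> \<tau>"
      using Fix_support by blast
    have "\<pi> y = y" using permutes_not_in[OF \<pi>(1)] yn yn2 by blast
    then show ?thesis using \<pi>(2) \<tau>x by simp
  qed
  then show ?case using IH unfolding Fix_Cons \<tau>_def[symmetric] by (simp add: sat_def z)
qed


lemma finite_bits[simp]: "finite (bits n)" by (simp add: bits_def)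

lemma finite_CL[simp]: "finite (CL n L)"
proof -
  have "CL n L \<subseteq> {p. p permutes bits n}" by (auto simp: CL_def)
  then show ?thesis using finite_permutations[of "bits n"] finite_subset by auto
qed

lemma sat_snoc: "sat (L @ [z]) \<rho> \<longleftrightarrow> sat L \<rho> \<and> \<rho> (fst z) = snd z"
  by (auto simp: sat_def)

lemma fiber:
  assumes inb: "inb n (L @ [z])" and r0: "\<rho>0 \<in> CL n (L @ [z])"
  shows "\<exists>m>0. \<forall>h::(nat \<Rightarrow> nat) \<Rightarrow> real.
           (\<Sum>\<tau>\<in>CL n L. h (fixstep z \<tau>)) = real m * (\<Sum>\<rho>\<in>CL n (L @ [z]). h \<rho>)"
proof -
  obtain x y where z: "z = (x, y)" by force
  have xb: "x \<in> bits n" and yb: "y \<in> bits n" using inb z by (auto simp: inb_def)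
  have r0p: "\<rho>0 permutes bits n" and r0s: "sat L \<rho>0" and r0x: "\<rho>0 x = y"
    using r0 z by (auto simp: CL_def sat_snoc)
  show ?thesis
  proof (cases "x \<in> fst ` set L")
    case True
    then obtain y' where y': "(x, y') \<in> set L" by force
    have "y' = y" using r0s r0x y' by (auto simp: sat_def)
    then have eqC: "CL n (L @ [z]) = CL n L" using y' z by (auto simp: CL_def sat_snoc sat_def)
    have "fixstep z \<tau> = \<tau>" if "\<tau> \<in> CL n L" for \<tau>
    proof -
      have "\<tau> x = y" using that y' \<open>y' = y\<close> by (auto simp: CL_def sat_def)
      then show ?thesis by (simp add: fixstep_def z)
    qed
    then show ?thesis by (intro exI[of _ 1]) (simp add: eqC)
  next
    case False
    define F where "F = fixstep z"
    define Y where "Y = snd ` set L"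
    have yY: "y \<notin> Y"
    proof
      assume "y \<in> Y"
      then obtain x' where x': "(x', y) \<in> set L" unfolding Y_def by force
      have "\<rho>0 x' = y" using r0s x' by (auto simp: sat_def)
      then have "x' = x" using r0x permutes_inj[OF r0p] by (auto dest: injD)
      then show False using False x' by force
    qed
    define m where "m = card (bits n - Y)"
    have mpos: "m > 0" unfolding m_def using yb yY by (auto simp: card_gt_0_iff)
    have FC: "F \<tau> \<in> CL n (L @ [z])" if "\<tau> \<in> CL n L" for \<tau>
    proof -
      have tp: "\<tau> permutes bits n" and ts: "sat L \<tau>" using that by (auto simp: CL_def)
      have "F \<tau> permutes bits n" unfolding F_def by (rule fixstep_permutes[OF tp]) (use xb yb z in auto)
      moreover have "F \<tau> x' = y'" if "(x', y') \<in> set L" for x' y'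
      proof -
        have "\<tau> x' = y'" using ts that by (auto simp: sat_def)
        moreover have "y' \<noteq> y" using yY that unfolding Y_def by force
        moreover have "x' \<noteq> x" using False that by force
        then have "y' \<noteq> \<tau> x" using \<open>\<tau> x' = y'\<close> permutes_inj[OF tp] by (auto dest: injD)
        ultimately show ?thesis by (simp add: F_def fixstep_def z)
      qed
      moreover have "F \<tau> x = y" by (simp add: F_def fixstep_def z)
      ultimately show ?thesis by (auto simp: CL_def sat_def z)
    qed
    have card_fiber: "card {\<tau> \<in> CL n L. F \<tau> = \<rho>} = m" if \<rho>: "\<rho> \<in> CL n (L @ [z])" for \<rho>
    proof -
      have rp: "\<rho> permutes bits n" and rs: "sat L \<rho>" and rx: "\<rho> x = y" using \<rho> z by (auto simp: CL_def sat_snoc)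
      have "bij_betw (\<lambda>\<tau>. \<tau> x) {\<tau> \<in> CL n L. F \<tau> = \<rho>} (bits n - Y)"
      proof (rule bij_betw_byWitness[where f'="\<lambda>w. Transposition.transpose y w \<circ> \<rho>"])
        show "\<forall>\<tau>\<in>{\<tau> \<in> CL n L. F \<tau> = \<rho>}. Transposition.transpose y (\<tau> x) \<circ> \<rho> = \<tau>"
        proof
          fix \<tau> assume "\<tau> \<in> {\<tau> \<in> CL n L. F \<tau> = \<rho>}"
          then have "\<rho> = Transposition.transpose y (\<tau> x) \<circ> \<tau>" by (simp add: F_def fixstep_def z)
          then show "Transposition.transpose y (\<tau> x) \<circ> \<rho> = \<tau>" by (simp add: fun_eq_iff)
        qed
        show "\<forall>w\<in>bits n - Y. (Transposition.transpose y w \<circ> \<rho>) x = w" using rx by simp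
        show "(\<lambda>\<tau>. \<tau> x) ` {\<tau> \<in> CL n L. F \<tau> = \<rho>} \<subseteq> bits n - Y"
        proof
          fix w assume "w \<in> (\<lambda>\<tau>. \<tau> x) ` {\<tau> \<in> CL n L. F \<tau> = \<rho>}"
          then obtain \<tau> where t: "\<tau> \<in> CL n L" "w = \<tau> x" by auto
          have tp: "\<tau> permutes bits n" and ts: "sat L \<tau>" using t by (auto simp: CL_def)
          have "w \<in> bits n" using t(2) xb permutes_in_image[OF tp] by simp
          moreover have "w \<notin> Y"
          proof
            assume "w \<in> Y"
            then obtain x' where x': "(x', w) \<in> set L" unfolding Y_def by force
            then have "\<tau> x' = w" using ts by (auto simp: sat_def)
            then have "x' = x" using t(2) permutes_inj[OF tp] by (auto dest: injD)
            then show False using False x' by force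
          qed
          ultimately show "w \<in> bits n - Y" by simp
        qed
        show "(\<lambda>w. Transposition.transpose y w \<circ> \<rho>) ` (bits n - Y) \<subseteq> {\<tau> \<in> CL n L. F \<tau> = \<rho>}"
        proof
          fix t assume "t \<in> (\<lambda>w. Transposition.transpose y w \<circ> \<rho>) ` (bits n - Y)"
          then obtain w where w: "w \<in> bits n" "w \<notin> Y" "t = Transposition.transpose y w \<circ> \<rho>" by auto
          have "t permutes bits n" unfolding w(3)
            by (rule permutes_compose[OF rp]) (rule permutes_swap_id, use yb w in auto)
          moreover have "sat L t"
            unfolding sat_def
          proof
            fix u assume u: "u \<in> set L"
            have "\<rho> (fst u) = snd u" using rs u by (auto simp: sat_def)
            moreover have "snd u \<noteq> y" "snd u \<noteq> w" using u yY w(2) unfolding Y_def by force+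
            ultimately show "t (fst u) = snd u" using w(3) by simp
          qed
          moreover have "F t = \<rho>" using w(3) rx by (simp add: F_def fixstep_def z fun_eq_iff)
          ultimately show "t \<in> {\<tau> \<in> CL n L. F \<tau> = \<rho>}" by (simp add: CL_def)
        qed
      qed
      then show ?thesis unfolding m_def by (rule bij_betw_same_card)
    qed
    show ?thesis
    proof (intro exI[of _ m] conjI allI mpos)
      fix h :: "(nat \<Rightarrow> nat) \<Rightarrow> real"
      have "(\<Sum>\<tau>\<in>CL n L. h (F \<tau>)) = (\<Sum>\<rho>\<in>CL n (L @ [z]). \<Sum>\<tau>\<in>{\<tau>. \<tau> \<in> CL n L \<and> F \<tau> = \<rho>}. h (F \<tau>))"
        by (rule sum.group[symmetric]) (use FC in auto)
      also have "\<dots> = (\<Sum>\<rho>\<in>CL n (L @ [z]). real m * h \<rho>)"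
      proof (rule sum.cong[OF refl])
        fix \<rho> assume r: "\<rho> \<in> CL n (L @ [z])"
        have "(\<Sum>\<tau>\<in>{\<tau>. \<tau> \<in> CL n L \<and> F \<tau> = \<rho>}. h (F \<tau>)) = (\<Sum>\<tau>\<in>{\<tau> \<in> CL n L. F \<tau> = \<rho>}. h \<rho>)"
          by (rule sum.cong) auto
        also have "\<dots> = real m * h \<rho>" using card_fiber[OF r] by simp
        finally show "(\<Sum>\<tau>\<in>{\<tau>. \<tau> \<in> CL n L \<and> F \<tau> = \<rho>}. h (F \<tau>)) = real m * h \<rho>" .
      qed
      finally show "(\<Sum>\<tau>\<in>CL n L. h (fixstep z \<tau>)) = real m * (\<Sum>\<rho>\<in>CL n (L @ [z]). h \<rho>)"
        by (simp add: F_def sum_distrib_left)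
    qed
  qed
qed

lemma uniform:
  assumes "inb n L" "\<rho>0 \<in> CL n L"
  shows "(\<Sum>\<sigma>\<in>Perms n. h (Fix L \<sigma>)) * real (card (CL n L)) = real (card (Perms n)) * (\<Sum>\<rho>\<in>CL n L. h \<rho>)"
  using assms
proof (induction L arbitrary: h rule: rev_induct)
  case Nil
  have "CL n [] = Perms n" by (auto simp: CL_def Perms_def sat_def)
  then show ?case by (simp add: mult.commute)
next
  case (snoc z L)
  have inbL: "inb n L" using snoc.prems by (auto simp: inb_def)
  have r0L: "\<rho>0 \<in> CL n L" using snoc.prems by (auto simp: CL_def sat_snoc)
  obtain m where m: "m > 0" "\<And>h::(nat \<Rightarrow> nat) \<Rightarrow> real. (\<Sum>\<tau>\<in>CL n L. h (fixstep z \<tau>)) = real m * (\<Sum>\<rho>\<in>CL n (L @ [z]). h \<rho>)"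
    using fiber[OF snoc.prems] by blast
  have cardL: "real (card (CL n L)) = real m * real (card (CL n (L @ [z])))"
    using m(2)[of "\<lambda>_. 1"] by simp
  have "(\<Sum>\<sigma>\<in>Perms n. h (Fix (L @ [z]) \<sigma>)) * real (card (CL n (L @ [z]))) * real m
      = (\<Sum>\<sigma>\<in>Perms n. (h \<circ> fixstep z) (Fix L \<sigma>)) * real (card (CL n L))"
    by (simp add: Fix_snoc cardL mult_ac)
  also have "\<dots> = real (card (Perms n)) * (\<Sum>\<rho>\<in>CL n L. (h \<circ> fixstep z) \<rho>)"
    by (rule snoc.IH[OF inbL r0L])
  also have "\<dots> = real (card (Perms n)) * (\<Sum>\<rho>\<in>CL n (L @ [z]). h \<rho>) * real m"
    using m(2)[of h] by (simp add: mult_ac)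
  finally show ?case using m(1) by simp
qed


definition cnj_p :: "nat \<Rightarrow> nat \<Rightarrow> (nat \<Rightarrow> nat) \<Rightarrow> (nat \<Rightarrow> nat)" where
  "cnj_p n K2 \<rho> = (\<lambda>u. if u < 2^n then xor (\<rho> (xor u K2)) K2 else u)"

lemma bits_iff: "x \<in> bits n \<longleftrightarrow> x < 2^n" by (simp add: bits_def)

lemma perm_lt: "\<rho> permutes bits n \<Longrightarrow> x < 2^n \<Longrightarrow> \<rho> x < 2^n"
  using permutes_in_image[of \<rho> "bits n" x] by (simp add: bits_iff)

lemma perm_inv_lt: "\<rho> permutes bits n \<Longrightarrow> x < 2^n \<Longrightarrow> inv \<rho> x < 2^n"
  using perm_lt[OF permutes_inv] by blast

lemma cnj_p_invol:
  assumes "\<rho> permutes bits n" "K2 < 2^n"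
  shows "cnj_p n K2 (cnj_p n K2 \<rho>) = \<rho>"
proof
  fix u show "cnj_p n K2 (cnj_p n K2 \<rho>) u = \<rho> u"
  proof (cases "u < 2^n")
    case True
    then have "xor u K2 < 2^n" using assms(2) xor_lt by blast
    moreover have "\<rho> u < 2^n" using perm_lt[OF assms(1) True] .
    ultimately show ?thesis using True by (simp add: cnj_p_def)
  next
    case False
    then have "u \<notin> bits n" by (simp add: bits_iff)
    then show ?thesis using False permutes_not_in[OF assms(1)] by (simp add: cnj_p_def)
  qed
qed

lemma cnj_p_lt: "\<rho> permutes bits n \<Longrightarrow> K2 < 2^n \<Longrightarrow> u < 2^n \<Longrightarrow> cnj_p n K2 \<rho> u < 2^n"
  by (simp add: cnj_p_def perm_lt xor_lt)

lemma cnj_p_inv_left: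
  assumes "\<rho> permutes bits n" "K2 < 2^n" "u < 2^n"
  shows "cnj_p n K2 (inv \<rho>) (cnj_p n K2 \<rho> u) = u"
  using assms cnj_p_lt[OF assms] by (simp add: cnj_p_def permutes_inverses)

lemma cnj_p_permutes:
  assumes "\<rho> permutes bits n" "K2 < 2^n"
  shows "cnj_p n K2 \<rho> permutes bits n"
proof (rule bij_imp_permutes)
  have ip: "inv \<rho> permutes bits n" using permutes_inv[OF assms(1)] .
  show "bij_betw (cnj_p n K2 \<rho>) (bits n) (bits n)"
  proof (rule bij_betw_byWitness[where f'="cnj_p n K2 (inv \<rho>)"])
    show "\<forall>a\<in>bits n. cnj_p n K2 (inv \<rho>) (cnj_p n K2 \<rho> a) = a"
      using cnj_p_inv_left[OF assms] by (simp add: bits_iff)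
    show "\<forall>a\<in>bits n. cnj_p n K2 \<rho> (cnj_p n K2 (inv \<rho>) a) = a"
      using cnj_p_inv_left[OF ip assms(2)] permutes_inv_inv[OF assms(1)] by (simp add: bits_iff)
    show "cnj_p n K2 \<rho> ` bits n \<subseteq> bits n" using cnj_p_lt[OF assms] by (auto simp: bits_iff)
    show "cnj_p n K2 (inv \<rho>) ` bits n \<subseteq> bits n" using cnj_p_lt[OF ip assms(2)] by (auto simp: bits_iff)
  qed
  show "\<And>x. x \<notin> bits n \<Longrightarrow> cnj_p n K2 \<rho> x = x" by (simp add: cnj_p_def bits_iff)
qed

lemma cnj_p_bij: "K2 < 2^n \<Longrightarrow> bij_betw (cnj_p n K2) (Perms n) (Perms n)"
  by (rule bij_betw_byWitness[where f'="cnj_p n K2"])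
     (auto simp: Perms_def cnj_p_invol cnj_p_permutes)


definition isCl :: "'w op \<Rightarrow> bool" where
  "isCl c = (case c of ClassEv _ \<Rightarrow> True | ClassInv _ \<Rightarrow> True | _ \<Rightarrow> False)"

definition uvf :: "(nat \<Rightarrow> nat) \<Rightarrow> 'w op \<Rightarrow> nat \<times> nat" where
  "uvf P c = (case c of ClassEv a \<Rightarrow> (a, P a) | ClassInv b \<Rightarrow> (inv P b, b) | _ \<Rightarrow> (0, 0))"

definition UV :: "'w op list \<Rightarrow> (nat \<Rightarrow> nat) \<Rightarrow> (nat \<times> nat) list" where
  "UV ops P = map (uvf P) (filter isCl ops)"

definition shiftL :: "nat \<Rightarrow> (nat \<times> nat) list \<Rightarrow> (nat \<times> nat) list" where
  "shiftL K2 L = map (\<lambda>z. (xor (fst z) K2, xor (snd z) K2)) L"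

definition Phi :: "nat \<Rightarrow> nat \<Rightarrow> 'w op list \<Rightarrow> (nat \<Rightarrow> nat \<Rightarrow> nat) \<Rightarrow> (nat \<Rightarrow> nat) \<Rightarrow> (nat \<Rightarrow> nat \<Rightarrow> nat)" where
  "Phi K1 K2 ops E P = E(K1 := Fix (shiftL K2 (UV ops P)) (E K1))"

lemma cl_cases:
  assumes "\<forall>c\<in>set ops. wfop k n c" "c \<in> set (filter isCl ops)"
  shows "(\<exists>a. c = ClassEv a \<and> a < 2^n \<and> ClassEv a \<in> set ops) \<or> (\<exists>b. c = ClassInv b \<and> b < 2^n \<and> ClassInv b \<in> set ops)"
  using assms by (cases c) (auto simp: isCl_def wfop_def)

lemma uvf_iff:
  assumes "P permutes bits n" "P' permutes bits n"
    "(\<exists>a. c = ClassEv a) \<or> (\<exists>b. c = ClassInv b)"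
  shows "P' (fst (uvf P c)) = snd (uvf P c) \<longleftrightarrow> uvf P' c = uvf P c"
  using assms(3)
proof
  assume "\<exists>a. c = ClassEv a" then show ?thesis by (auto simp: uvf_def)
next
  assume "\<exists>b. c = ClassInv b"
  then obtain b where c: "c = ClassInv b" by blast
  show ?thesis unfolding c uvf_def
    using permutes_inv_eq[OF assms(2), of b "inv P b"] by auto
qed

lemma UV_iff:
  assumes "P permutes bits n" "P' permutes bits n" "\<forall>c\<in>set ops. wfop k n c"
  shows "(\<forall>z\<in>set (UV ops P). P' (fst z) = snd z) \<longleftrightarrow> UV ops P' = UV ops P"
proof -
  have "(\<forall>z\<in>set (UV ops P). P' (fst z) = snd z) \<longleftrightarrow> (\<forall>c\<in>set (filter isCl ops). P' (fst (uvf P c)) = snd (uvf P c))"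
    by (simp add: UV_def)
  also have "\<dots> \<longleftrightarrow> (\<forall>c\<in>set (filter isCl ops). uvf P' c = uvf P c)"
  proof (intro ball_cong refl uvf_iff[OF assms(1,2)])
    fix c assume "c \<in> set (filter isCl ops)"
    then show "(\<exists>a. c = ClassEv a) \<or> (\<exists>b. c = ClassInv b)" using cl_cases[OF assms(3)] by blast
  qed
  also have "\<dots> \<longleftrightarrow> UV ops P' = UV ops P" by (simp add: UV_def map_eq_conv)
  finally show ?thesis .
qed

lemma UV_lt:
  assumes "P permutes bits n" "\<forall>c\<in>set ops. wfop k n c" "z \<in> set (UV ops P)"
  shows "fst z < 2^n" "snd z < 2^n"
proof -
  obtain c where c: "c \<in> set (filter isCl ops)" "z = uvf P c" using assms(3) by (auto simp: UV_def)
  show "fst z < 2^n" "snd z < 2^n" using cl_cases[OF assms(2) c(1)] c(2)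
    by (auto simp: uvf_def perm_lt[OF assms(1)] perm_inv_lt[OF assms(1)])
qed

lemma inb_shift:
  assumes "P permutes bits n" "\<forall>c\<in>set ops. wfop k n c" "K2 < 2^n"
  shows "inb n (shiftL K2 (UV ops P))"
  using UV_lt[OF assms(1,2)] assms(3) by (auto simp: inb_def shiftL_def bits_iff xor_lt)

lemma xor_eq_iff: "(a = xor b K) \<longleftrightarrow> (xor a K = (b::nat))"
  by (metis xor_cancel)

lemma sat_shift_iff:
  assumes "P permutes bits n" "\<rho> permutes bits n" "\<forall>c\<in>set ops. wfop k n c" "K2 < 2^n"
  shows "sat (shiftL K2 (UV ops P)) \<rho> \<longleftrightarrow> UV ops (cnj_p n K2 \<rho>) = UV ops P"
proof -
  have "sat (shiftL K2 (UV ops P)) \<rho> \<longleftrightarrow> (\<forall>z\<in>set (UV ops P). \<rho> (xor (fst z) K2) = xor (snd z) K2)"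
    by (simp add: sat_def shiftL_def)
  also have "\<dots> \<longleftrightarrow> (\<forall>z\<in>set (UV ops P). cnj_p n K2 \<rho> (fst z) = snd z)"
    using UV_lt[OF assms(1,3)] by (auto simp: cnj_p_def xor_eq_iff)
  also have "\<dots> \<longleftrightarrow> UV ops (cnj_p n K2 \<rho>) = UV ops P"
    by (rule UV_iff[OF assms(1) cnj_p_permutes[OF assms(2,4)] assms(3)])
  finally show ?thesis .
qed

lemma run_dep:
  assumes "\<forall>a. ClassEv a \<in> set ops \<longrightarrow> Ev a = Ev' a" "\<forall>b. ClassInv b \<in> set ops \<longrightarrow> Inv b = Inv' b"
  shows "run k n E Ev Inv ops \<psi> = run k n E Ev' Inv' ops \<psi>"
  using assms
proof (induction ops arbitrary: \<psi>)
  case Nil then show ?case by (simp add: run_def)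
next
  case (Cons c cs)
  have "step k n E Ev Inv c \<psi> = step k n E Ev' Inv' c \<psi>"
    using Cons.prems by (cases c) auto
  then show ?case using Cons by (simp add: run_def)
qed

lemma FX_agree:
  assumes "P permutes bits n" "\<rho> permutes bits n" "\<forall>c\<in>set ops. wfop k n c" "K2 < 2^n"
    "sat (shiftL K2 (UV ops P)) \<rho>" "E' K1 = \<rho>"
  shows "\<forall>a. ClassEv a \<in> set ops \<longrightarrow> P a = FX E' K1 K2 a"
    "\<forall>b. ClassInv b \<in> set ops \<longrightarrow> inv P b = FX_inv E' K1 K2 b"
proof -
  show "\<forall>a. ClassEv a \<in> set ops \<longrightarrow> P a = FX E' K1 K2 a"
  proof (intro allI impI)
  fix a assume a: "ClassEv a \<in> set ops"
  then have "(a, P a) \<in> set (UV ops P)" by (force simp: UV_def uvf_def isCl_def)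
  then have "\<rho> (xor a K2) = xor (P a) K2" using assms(5) by (force simp: sat_def shiftL_def)
  then show "P a = FX E' K1 K2 a" by (simp add: FX_def assms(6))
  qed
  show "\<forall>b. ClassInv b \<in> set ops \<longrightarrow> inv P b = FX_inv E' K1 K2 b"
  proof (intro allI impI)
  fix b assume b: "ClassInv b \<in> set ops"
  then have "(inv P b, b) \<in> set (UV ops P)" by (force simp: UV_def uvf_def isCl_def)
  then have "\<rho> (xor (inv P b) K2) = xor b K2" using assms(5) by (force simp: sat_def shiftL_def)
  then have "inv \<rho> (xor b K2) = xor (inv P b) K2" using permutes_inv_eq[OF assms(2)] by blast
  then show "inv P b = FX_inv E' K1 K2 b" by (simp add: FX_inv_def assms(6))
  qed
qed


lemma finite_Perms[simp]: "finite (Perms n)"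
  unfolding Perms_def by (rule finite_permutations) simp

lemma finite_Ics[simp]: "finite (Ics k n)"
proof -
  have "Ics k n \<subseteq> (\<lambda>f K. if K < 2^k then f K else id) ` (PiE {..<(2::nat)^k} (\<lambda>_. Perms n))"
  proof
    fix E assume E: "E \<in> Ics k n"
    have "E = (\<lambda>K. if K < 2^k then restrict E {..<2^k} K else id)"
      using E by (auto simp: Ics_def fun_eq_iff)
    moreover have "restrict E {..<2^k} \<in> PiE {..<(2::nat)^k} (\<lambda>_. Perms n)"
      using E by (auto simp: Ics_def Perms_def)
    ultimately show "E \<in> (\<lambda>f K. if K < 2^k then f K else id) ` (PiE {..<(2::nat)^k} (\<lambda>_. Perms n))"
      by blast
  qed
  moreover have "finite (PiE {..<(2::nat)^k} (\<lambda>_. Perms n))" by (rule finite_PiE) auto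
  ultimately show ?thesis using finite_subset by blast
qed

lemma Ics_upd: "E \<in> Ics k n \<Longrightarrow> K1 < 2^k \<Longrightarrow> \<sigma> permutes bits n \<Longrightarrow> E(K1 := \<sigma>) \<in> Ics k n"
  by (auto simp: Ics_def)

lemma Ics_perm: "E \<in> Ics k n \<Longrightarrow> K1 < 2^k \<Longrightarrow> E K1 permutes bits n"
  by (auto simp: Ics_def)

lemma sum_Ics_split:
  assumes "K1 < 2^k"
  shows "(\<Sum>E\<in>Ics k n. G E) = (\<Sum>E0\<in>{E\<in>Ics k n. E K1 = id}. \<Sum>\<sigma>\<in>Perms n. G (E0(K1 := \<sigma>)))"
proof -
  have "(\<Sum>E0\<in>{E\<in>Ics k n. E K1 = id}. \<Sum>\<sigma>\<in>Perms n. G (E0(K1 := \<sigma>)))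
      = (\<Sum>p\<in>{E\<in>Ics k n. E K1 = id} \<times> Perms n. G ((fst p)(K1 := snd p)))"
    by (simp add: sum.cartesian_product case_prod_beta)
  also have "\<dots> = (\<Sum>E\<in>Ics k n. G E)"
  proof (rule sum.reindex_bij_betw[where h="\<lambda>p. (fst p)(K1 := snd p)" and g=G])
    show "bij_betw (\<lambda>p. (fst p)(K1 := snd p)) ({E \<in> Ics k n. E K1 = id} \<times> Perms n) (Ics k n)"
      using assms
      by (rule_tac bij_betw_byWitness[where f'="\<lambda>E. (E(K1 := id), E K1)"])
         (auto simp: fun_eq_iff Perms_def Ics_perm intro!: Ics_upd)
  qed
  finally show ?thesis by simp
qed


lemma coupling:
  fixes ops :: "('w::finite) op list" and w0 :: 'w
  assumes K1: "K1 < 2^k" and K2: "K2 < 2^n" and wf: "\<forall>c\<in>set ops. wfop k n c"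
  shows "real (card (Perms n)) * (\<Sum>E\<in>Ics k n. accept_prob k n E (FX E K1 K2) (FX_inv E K1 K2) w0 ops acc)
       = (\<Sum>P\<in>Perms n. \<Sum>E\<in>Ics k n. accept_prob k n (Phi K1 K2 ops E P) P (inv P) w0 ops acc)"
proof -
  define g where "g E = accept_prob k n E (FX E K1 K2) (FX_inv E K1 K2) w0 ops acc" for E
  define L where "L P = shiftL K2 (UV ops P)" for P
  define M where "M = real (card (Perms n))"
  have satL: "P \<in> Perms n \<Longrightarrow> \<rho> permutes bits n \<Longrightarrow> sat (L P) \<rho> \<longleftrightarrow> UV ops (cnj_p n K2 \<rho>) = UV ops P" for P \<rho>
    unfolding L_def by (rule sat_shift_iff) (use wf K2 in \<open>auto simp: Perms_def\<close>)
  have PpL: "cnj_p n K2 P \<in> CL n (L P)" if P: "P \<in> Perms n" for P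
  proof -
    have pp: "P permutes bits n" using P by (simp add: Perms_def)
    have cp: "cnj_p n K2 P permutes bits n" by (rule cnj_p_permutes[OF pp K2])
    show ?thesis unfolding CL_def using satL[OF P cp] cnj_p_invol[OF pp K2] cp by simp
  qed
  have inbL: "P \<in> Perms n \<Longrightarrow> inb n (L P)" for P
    unfolding L_def by (rule inb_shift) (use wf K2 in \<open>auto simp: Perms_def\<close>)
  have cardpos: "P \<in> Perms n \<Longrightarrow> card (CL n (L P)) > 0" for P
    using PpL card_gt_0_iff finite_CL by blast
  have step1: "accept_prob k n (Phi K1 K2 ops E P) P (inv P) w0 ops acc = g (Phi K1 K2 ops E P)"
    if P: "P \<in> Perms n" and E: "E \<in> Ics k n" for P E
  proof -
    define \<rho> where "\<rho> = Fix (L P) (E K1)"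
    have pp: "P permutes bits n" using P by (simp add: Perms_def)
    have rp: "\<rho> permutes bits n" unfolding \<rho>_def by (rule Fix_permutes[OF inbL[OF P] Ics_perm[OF E K1]])
    have rs: "sat (L P) \<rho>" unfolding \<rho>_def
      using Fix_sat[OF inbL[OF P] _ _ Ics_perm[OF E K1], of "cnj_p n K2 P"] PpL[OF P] by (simp add: CL_def)
    have ph: "Phi K1 K2 ops E P K1 = \<rho>" by (simp add: Phi_def \<rho>_def L_def)
    have rs': "sat (shiftL K2 (UV ops P)) \<rho>" using rs by (simp add: L_def)
    have ag1: "\<forall>a. ClassEv a \<in> set ops \<longrightarrow> P a = FX (Phi K1 K2 ops E P) K1 K2 a"
      by (rule FX_agree(1)[where \<rho>=\<rho>]) (use pp rp wf K2 rs' ph in auto)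
    have ag2: "\<forall>b. ClassInv b \<in> set ops \<longrightarrow> inv P b = FX_inv (Phi K1 K2 ops E P) K1 K2 b"
      by (rule FX_agree(2)[where \<rho>=\<rho>]) (use pp rp wf K2 rs' ph in auto)
    have "run k n (Phi K1 K2 ops E P) P (inv P) ops (init_state w0) = run k n (Phi K1 K2 ops E P) (FX (Phi K1 K2 ops E P) K1 K2) (FX_inv (Phi K1 K2 ops E P) K1 K2) ops (init_state w0)"
      by (rule run_dep[OF ag1 ag2])
    then show ?thesis unfolding g_def accept_prob_def by simp
  qed
  have step2: "(\<Sum>E\<in>Ics k n. g (Phi K1 K2 ops E P))
      = M / real (card (CL n (L P))) * (\<Sum>E\<in>Ics k n. if E K1 \<in> CL n (L P) then g E else 0)"
    if P: "P \<in> Perms n" for P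
  proof -
    define C where "C = CL n (L P)"
    define I0 where "I0 = {E\<in>Ics k n. E K1 = id}"
    have cpos: "real (card C) > 0" using cardpos[OF P] unfolding C_def by simp
    have CP: "C \<subseteq> Perms n" by (auto simp: C_def CL_def Perms_def)
    have "(\<Sum>E\<in>Ics k n. g (Phi K1 K2 ops E P)) = (\<Sum>E0\<in>I0. \<Sum>\<sigma>\<in>Perms n. g (Phi K1 K2 ops (E0(K1 := \<sigma>)) P))"
      unfolding I0_def by (rule sum_Ics_split[OF K1])
    also have "\<dots> = (\<Sum>E0\<in>I0. \<Sum>\<sigma>\<in>Perms n. g (E0(K1 := Fix (L P) \<sigma>)))"
      by (simp add: Phi_def L_def)
    also have "\<dots> = (\<Sum>E0\<in>I0. M / real (card C) * (\<Sum>\<rho>\<in>C. g (E0(K1 := \<rho>))))"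
    proof (rule sum.cong[OF refl])
      fix E0
      have "(\<Sum>\<sigma>\<in>Perms n. g (E0(K1 := Fix (L P) \<sigma>))) * real (card C) = M * (\<Sum>\<rho>\<in>C. g (E0(K1 := \<rho>)))"
        unfolding C_def M_def by (rule uniform[OF inbL[OF P] PpL[OF P]])
      then show "(\<Sum>\<sigma>\<in>Perms n. g (E0(K1 := Fix (L P) \<sigma>))) = M / real (card C) * (\<Sum>\<rho>\<in>C. g (E0(K1 := \<rho>)))"
        using cpos by (simp add: field_simps)
    qed
    also have "\<dots> = M / real (card C) * (\<Sum>E0\<in>I0. \<Sum>\<rho>\<in>Perms n. (\<lambda>E. if E K1 \<in> C then g E else 0) (E0(K1 := \<rho>)))"
    proof -
      have "(\<Sum>\<rho>\<in>C. g (E0(K1 := \<rho>))) = (\<Sum>\<rho>\<in>Perms n. (\<lambda>E. if E K1 \<in> C then g E else 0) (E0(K1 := \<rho>)))" for E0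
      proof -
        have "(\<Sum>\<rho>\<in>Perms n. (\<lambda>E. if E K1 \<in> C then g E else 0) (E0(K1 := \<rho>)))
            = (\<Sum>\<rho>\<in>Perms n. if \<rho> \<in> C then g (E0(K1 := \<rho>)) else 0)" by simp
        also have "\<dots> = (\<Sum>\<rho>\<in>Perms n \<inter> C. g (E0(K1 := \<rho>)))"
          by (rule sum.inter_restrict[symmetric]) simp
        also have "Perms n \<inter> C = C" using CP by blast
        finally show ?thesis by (rule sym)
      qed
      then show ?thesis by (simp add: sum_distrib_left)
    qed
    also have "\<dots> = M / real (card C) * (\<Sum>E\<in>Ics k n. if E K1 \<in> C then g E else 0)"
      unfolding I0_def by (subst sum_Ics_split[OF K1]) (rule refl)
    finally show ?thesis unfolding C_def .
  qed
  have step3: "(\<Sum>P\<in>Perms n. (if E K1 \<in> CL n (L P) then 1 else 0) / real (card (CL n (L P)))) = 1"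
    if E: "E \<in> Ics k n" for E
  proof -
    define \<rho>0 where "\<rho>0 = E K1"
    have r0p: "\<rho>0 permutes bits n" unfolding \<rho>0_def by (rule Ics_perm[OF E K1])
    define Q where "Q = cnj_p n K2 \<rho>0"
    have QP: "Q \<in> Perms n" unfolding Q_def Perms_def by (simp add: cnj_p_permutes[OF r0p K2])
    have iff: "\<rho>0 \<in> CL n (L P) \<longleftrightarrow> UV ops P = UV ops Q" if "P \<in> Perms n" for P
      using satL[OF that r0p] r0p unfolding CL_def Q_def by auto
    define S where "S = {P\<in>Perms n. UV ops P = UV ops Q}"
    have "(\<Sum>P\<in>Perms n. (if \<rho>0 \<in> CL n (L P) then 1 else 0) / real (card (CL n (L P))))
        = (\<Sum>P\<in>Perms n. if P \<in> S then 1 / real (card (CL n (L Q))) else 0)"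
    proof (rule sum.cong[OF refl])
      fix P assume P: "P \<in> Perms n"
      show "(if \<rho>0 \<in> CL n (L P) then 1 else 0) / real (card (CL n (L P))) = (if P \<in> S then 1 / real (card (CL n (L Q))) else 0)"
        using iff[OF P] P unfolding S_def L_def by auto
    qed
    also have "\<dots> = (\<Sum>P\<in>Perms n \<inter> S. 1 / real (card (CL n (L Q))))"
      by (rule sum.inter_restrict[symmetric]) simp
    also have "Perms n \<inter> S = S" unfolding S_def by blast
    also have "(\<Sum>P\<in>S. 1 / real (card (CL n (L Q)))) = real (card S) / real (card (CL n (L Q)))"
      by simp
    also have "card (CL n (L Q)) = card S"
    proof (rule bij_betw_same_card[where f="cnj_p n K2"])
      show "bij_betw (cnj_p n K2) (CL n (L Q)) S"
      proof (rule bij_betw_byWitness[where f'="cnj_p n K2"])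
        show "\<forall>a\<in>CL n (L Q). cnj_p n K2 (cnj_p n K2 a) = a"
          by (auto simp: CL_def cnj_p_invol K2)
        show "\<forall>a'\<in>S. cnj_p n K2 (cnj_p n K2 a') = a'"
          by (auto simp: S_def Perms_def cnj_p_invol K2)
        show "cnj_p n K2 ` CL n (L Q) \<subseteq> S"
        proof
          fix P assume "P \<in> cnj_p n K2 ` CL n (L Q)"
          then obtain \<rho> where r: "\<rho> \<in> CL n (L Q)" "P = cnj_p n K2 \<rho>" by auto
          have rp: "\<rho> permutes bits n" using r by (simp add: CL_def)
          have "UV ops (cnj_p n K2 \<rho>) = UV ops Q" using satL[OF QP rp] r by (simp add: CL_def)
          then show "P \<in> S" using r cnj_p_permutes[OF rp K2] by (simp add: S_def Perms_def)
        qed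
        show "cnj_p n K2 ` S \<subseteq> CL n (L Q)"
        proof
          fix \<rho> assume "\<rho> \<in> cnj_p n K2 ` S"
          then obtain P where r: "P \<in> S" "\<rho> = cnj_p n K2 P" by auto
          have pp: "P permutes bits n" using r by (simp add: S_def Perms_def)
          have rp: "\<rho> permutes bits n" using r cnj_p_permutes[OF pp K2] by simp
          have "UV ops (cnj_p n K2 \<rho>) = UV ops Q" using r cnj_p_invol[OF pp K2] by (simp add: S_def)
          then show "\<rho> \<in> CL n (L Q)" using satL[OF QP rp] rp by (simp add: CL_def)
        qed
      qed
    qed
    also have "card S > 0" using QP unfolding S_def by (auto simp: card_gt_0_iff)
    then have "real (card S) / real (card S) = 1" by simp
    finally show ?thesis unfolding \<rho>0_def by simp
  qed
  have "(\<Sum>P\<in>Perms n. \<Sum>E\<in>Ics k n. accept_prob k n (Phi K1 K2 ops E P) P (inv P) w0 ops acc)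
      = (\<Sum>P\<in>Perms n. \<Sum>E\<in>Ics k n. g (Phi K1 K2 ops E P))"
    by (intro sum.cong refl step1)
  also have "\<dots> = (\<Sum>P\<in>Perms n. M / real (card (CL n (L P))) * (\<Sum>E\<in>Ics k n. if E K1 \<in> CL n (L P) then g E else 0))"
    by (intro sum.cong refl step2)
  also have "\<dots> = (\<Sum>P\<in>Perms n. \<Sum>E\<in>Ics k n. M * g E * ((if E K1 \<in> CL n (L P) then 1 else 0) / real (card (CL n (L P)))))"
    by (auto simp: sum_distrib_left intro!: sum.cong split: if_split)
  also have "\<dots> = (\<Sum>E\<in>Ics k n. \<Sum>P\<in>Perms n. M * g E * ((if E K1 \<in> CL n (L P) then 1 else 0) / real (card (CL n (L P)))))"
    by (rule sum.swap)
  also have "\<dots> = (\<Sum>E\<in>Ics k n. M * g E * (\<Sum>P\<in>Perms n. (if E K1 \<in> CL n (L P) then 1 else 0) / real (card (CL n (L P)))))"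
    by (simp add: sum_distrib_left)
  also have "\<dots> = (\<Sum>E\<in>Ics k n. M * g E)"
    by (intro sum.cong refl) (simp add: step3)
  finally show ?thesis by (simp add: M_def g_def sum_distrib_left)
qed


definition mpt :: "nat \<Rightarrow> nat \<Rightarrow> nat \<Rightarrow> nat \<Rightarrow> ('w::finite) qstate \<Rightarrow> real" where
  "mpt k n K x \<phi> = mass k n (\<lambda>K' x'. K' = K \<and> x' = x) \<phi>"

lemma mass_union_list:
  fixes \<phi> :: "('w::finite) qstate" and l :: nat
  assumes "\<forall>K x. D K x \<longrightarrow> (\<exists>i<l. K = K1 \<and> (x = f i \<or> x = g i))"
  shows "mass k n D \<phi> \<le> (\<Sum>i<l. mpt k n K1 (f i) \<phi> + mpt k n K1 (g i) \<phi>)"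
proof -
  let ?V = "valid k n :: 'w basis set"
  let ?c = "\<lambda>b::'w basis. (cmod (\<phi> b))^2"
  have pt: "(if D (fst b) (fst (snd b)) then ?c b else 0)
      \<le> (\<Sum>i<l. (if fst b = K1 \<and> fst (snd b) = f i then ?c b else 0) + (if fst b = K1 \<and> fst (snd b) = g i then ?c b else 0))" for b
  proof (cases "D (fst b) (fst (snd b))")
    case True
    then obtain i where i: "i < l" "fst b = K1" "fst (snd b) = f i \<or> fst (snd b) = g i" using assms by blast
    have "?c b \<le> (if fst b = K1 \<and> fst (snd b) = f i then ?c b else 0) + (if fst b = K1 \<and> fst (snd b) = g i then ?c b else 0)"
      using i by auto
    also have "\<dots> \<le> (\<Sum>i<l. (if fst b = K1 \<and> fst (snd b) = f i then ?c b else 0) + (if fst b = K1 \<and> fst (snd b) = g i then ?c b else 0))"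
      by (rule member_le_sum[where f="\<lambda>i. (if fst b = K1 \<and> fst (snd b) = f i then ?c b else 0) + (if fst b = K1 \<and> fst (snd b) = g i then ?c b else 0)"]) (use i in auto)
    finally show ?thesis using True by simp
  next
    case False
    then show ?thesis by (simp add: sum_nonneg)
  qed
  have "mass k n D \<phi> \<le> (\<Sum>b\<in>?V. \<Sum>i<l. (if fst b = K1 \<and> fst (snd b) = f i then ?c b else 0) + (if fst b = K1 \<and> fst (snd b) = g i then ?c b else 0))"
    unfolding mass_def by (rule sum_mono) (rule pt)
  also have "\<dots> = (\<Sum>i<l. \<Sum>b\<in>?V. (if fst b = K1 \<and> fst (snd b) = f i then ?c b else 0) + (if fst b = K1 \<and> fst (snd b) = g i then ?c b else 0))"
    by (rule sum.swap)
  also have "\<dots> = (\<Sum>i<l. mpt k n K1 (f i) \<phi> + mpt k n K1 (g i) \<phi>)"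
    by (simp add: mpt_def mass_def sum.distrib)
  finally show ?thesis .
qed

lemma mpt_total:
  fixes \<phi> :: "('w::finite) qstate"
  assumes "nrm k n \<phi> = 1"
  shows "(\<Sum>K1\<in>bits k. \<Sum>x\<in>bits n. mpt k n K1 x \<phi>) = 1"
proof -
  let ?V = "valid k n :: 'w basis set"
  let ?c = "\<lambda>b::'w basis. (cmod (\<phi> b))^2"
  have "(\<Sum>K1\<in>bits k. \<Sum>x\<in>bits n. mpt k n K1 x \<phi>)
      = (\<Sum>K1\<in>bits k. \<Sum>x\<in>bits n. \<Sum>b\<in>?V. if fst b = K1 \<and> fst (snd b) = x then ?c b else 0)"
    by (simp add: mpt_def mass_def)
  also have "\<dots> = (\<Sum>K1\<in>bits k. \<Sum>b\<in>?V. \<Sum>x\<in>bits n. if fst b = K1 \<and> fst (snd b) = x then ?c b else 0)"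
    by (intro sum.cong refl sum.swap)
  also have "\<dots> = (\<Sum>b\<in>?V. \<Sum>K1\<in>bits k. \<Sum>x\<in>bits n. if fst b = K1 \<and> fst (snd b) = x then ?c b else 0)"
    by (rule sum.swap)
  also have "\<dots> = (\<Sum>b\<in>?V. ?c b)"
  proof (rule sum.cong[OF refl])
    fix b assume b: "b \<in> ?V"
    have k: "fst b \<in> bits k" and x: "fst (snd b) \<in> bits n" using b by (auto simp: valid_def bits_def)
    have "(\<Sum>K1\<in>bits k. \<Sum>x\<in>bits n. if fst b = K1 \<and> fst (snd b) = x then ?c b else 0)
        = (\<Sum>K1\<in>bits k. if fst b = K1 then (\<Sum>x\<in>bits n. if fst (snd b) = x then ?c b else 0) else 0)"
      by (intro sum.cong refl) auto
    also have "\<dots> = ?c b" using k x by simp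
    finally show "(\<Sum>K1\<in>bits k. \<Sum>x\<in>bits n. if fst b = K1 \<and> fst (snd b) = x then ?c b else 0) = ?c b" .
  qed
  also have "\<dots> = (nrm k n \<phi>)^2" unfolding nrm_def by (simp add: L2sq)
  finally show ?thesis using assms by simp
qed

lemma bij_xor: "u < 2^n \<Longrightarrow> bij_betw (\<lambda>K2. xor u K2) (bits n) (bits n)"
  by (rule bij_betw_byWitness[where f'="\<lambda>K2. xor u K2"])
     (auto simp: bits_iff xor_lt xor.assoc[symmetric])

lemma bij_perm_xor: "\<sigma> permutes bits n \<Longrightarrow> u < 2^n \<Longrightarrow> bij_betw (\<lambda>K2. \<sigma> (xor u K2)) (bits n) (bits n)"
  using bij_betw_trans[OF bij_xor permutes_imp_bij] by (simp add: o_def)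

lemma sum_mpt_bij:
  assumes "\<And>K1. K1 \<in> bits k \<Longrightarrow> bij_betw (h K1) (bits n) (bits n)" "nrm k n \<phi> = 1"
  shows "(\<Sum>K1\<in>bits k. \<Sum>K2\<in>bits n. mpt k n K1 (h K1 K2) \<phi>) = 1"
proof -
  have "(\<Sum>K1\<in>bits k. \<Sum>K2\<in>bits n. mpt k n K1 (h K1 K2) \<phi>) = (\<Sum>K1\<in>bits k. \<Sum>x\<in>bits n. mpt k n K1 x \<phi>)"
  proof (rule sum.cong[OF refl])
    fix K1 assume "K1 \<in> bits k"
    show "(\<Sum>K2\<in>bits n. mpt k n K1 (h K1 K2) \<phi>) = (\<Sum>x\<in>bits n. mpt k n K1 x \<phi>)"
      by (rule sum.reindex_bij_betw[OF assms(1)[OF \<open>K1 \<in> bits k\<close>]])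
  qed
  also have "\<dots> = 1" by (rule mpt_total[OF assms(2)])
  finally show ?thesis .
qed


lemma cauchy_sqrt:
  assumes "finite A" "\<And>a. a \<in> A \<Longrightarrow> 0 \<le> m a"
  shows "(\<Sum>a\<in>A. sqrt (m a)) \<le> sqrt (real (card A)) * sqrt (\<Sum>a\<in>A. m a)"
proof -
  have "(\<Sum>a\<in>A. sqrt (m a)) = (\<Sum>a\<in>A. \<bar>sqrt (m a)\<bar> * \<bar>1\<bar>)" using assms(2) by (intro sum.cong) auto
  also have "\<dots> \<le> L2_set (\<lambda>a. sqrt (m a)) A * L2_set (\<lambda>a. 1) A" by (rule L2_set_mult_ineq)
  also have "L2_set (\<lambda>a. sqrt (m a)) A = sqrt (\<Sum>a\<in>A. m a)"
    unfolding L2_set_def using assms(2) by (intro arg_cong[where f=sqrt] sum.cong) auto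
  also have "L2_set (\<lambda>a. 1::real) A = sqrt (real (card A))" by (simp add: L2_set_constant)
  finally show ?thesis by (simp add: mult.commute)
qed

lemma Phi_other: "K' \<noteq> K1 \<Longrightarrow> Phi K1 K2 ops E P K' = E K'"
  by (simp add: Phi_def)

lemma Phi_K1: "Phi K1 K2 ops E P K1 = Fix (shiftL K2 (UV ops P)) (E K1)"
  by (simp add: Phi_def)

lemma set_shiftL_nth:
  "z \<in> set (shiftL K2 L) \<Longrightarrow> \<exists>i<length L. z = (xor (fst (L!i)) K2, xor (snd (L!i)) K2)"
  unfolding shiftL_def in_set_conv_nth by (metis length_map nth_map)

lemma fwd_cond:
  assumes "E K1 permutes bits n"
  shows "\<forall>K' x. Phi K1 K2 ops E P K' x \<noteq> E K' x \<longrightarrow>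
     (\<exists>i<length (UV ops P). K' = K1 \<and> (x = xor (fst (UV ops P ! i)) K2 \<or> x = inv (E K1) (xor (snd (UV ops P ! i)) K2)))"
proof (intro allI impI)
  fix K' x assume ne: "Phi K1 K2 ops E P K' x \<noteq> E K' x"
  then have K': "K' = K1" using Phi_other by metis
  define \<sigma> where "\<sigma> = E K1"
  define L where "L = shiftL K2 (UV ops P)"
  obtain \<pi> where \<pi>: "\<pi> permutes (snd ` set L \<union> \<sigma> ` fst ` set L)" "Fix L \<sigma> = \<pi> \<circ> \<sigma>"
    using Fix_support by blast
  have "Fix L \<sigma> x \<noteq> \<sigma> x" using ne K' by (simp add: Phi_K1 L_def \<sigma>_def)
  then have "\<pi> (\<sigma> x) \<noteq> \<sigma> x" using \<pi>(2) by simp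
  then have "\<sigma> x \<in> snd ` set L \<union> \<sigma> ` fst ` set L" using permutes_not_in[OF \<pi>(1)] by blast
  then show "\<exists>i<length (UV ops P). K' = K1 \<and> (x = xor (fst (UV ops P ! i)) K2 \<or> x = inv (E K1) (xor (snd (UV ops P ! i)) K2))"
  proof
    assume "\<sigma> x \<in> snd ` set L"
    then obtain z where z: "z \<in> set L" "\<sigma> x = snd z" by auto
    obtain i where i: "i < length (UV ops P)" "z = (xor (fst (UV ops P ! i)) K2, xor (snd (UV ops P ! i)) K2)"
      using set_shiftL_nth[OF z(1)[unfolded L_def]] by blast
    have "x = inv (E K1) (xor (snd (UV ops P ! i)) K2)"
      using z(2) i(2) permutes_inverses(2)[OF assms] unfolding \<sigma>_def by (metis snd_conv)
    then show ?thesis using i(1) K' by blast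
  next
    assume "\<sigma> x \<in> \<sigma> ` fst ` set L"
    then obtain z where z: "z \<in> set L" "\<sigma> x = \<sigma> (fst z)" by auto
    then have "x = fst z" using permutes_inj[OF assms] unfolding \<sigma>_def by (auto dest: injD)
    obtain i where i: "i < length (UV ops P)" "z = (xor (fst (UV ops P ! i)) K2, xor (snd (UV ops P ! i)) K2)"
      using set_shiftL_nth[OF z(1)[unfolded L_def]] by blast
    then show ?thesis using \<open>x = fst z\<close> K' by auto
  qed
qed

lemma inv_cond:
  assumes "E K1 permutes bits n"
  shows "\<forall>K' y. inv (Phi K1 K2 ops E P K') y \<noteq> inv (E K') y \<longrightarrow>
     (\<exists>i<length (UV ops P). K' = K1 \<and> (y = xor (snd (UV ops P ! i)) K2 \<or> y = E K1 (xor (fst (UV ops P ! i)) K2)))"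
proof (intro allI impI)
  fix K' y assume ne: "inv (Phi K1 K2 ops E P K') y \<noteq> inv (E K') y"
  then have K': "K' = K1" using Phi_other by metis
  define \<sigma> where "\<sigma> = E K1"
  define L where "L = shiftL K2 (UV ops P)"
  define S where "S = snd ` set L \<union> \<sigma> ` fst ` set L"
  obtain \<pi> where \<pi>: "\<pi> permutes S" "Fix L \<sigma> = \<pi> \<circ> \<sigma>"
    using Fix_support unfolding S_def by blast
  have "inv (\<pi> \<circ> \<sigma>) = inv \<sigma> \<circ> inv \<pi>"
    by (rule o_inv_distrib) (use permutes_bij[OF \<pi>(1)] permutes_bij[OF assms] \<sigma>_def in auto)
  moreover have "inv (Fix L \<sigma>) y \<noteq> inv \<sigma> y" using ne K' by (simp add: Phi_K1 L_def \<sigma>_def)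
  ultimately have "inv \<sigma> (inv \<pi> y) \<noteq> inv \<sigma> y" using \<pi>(2) by simp
  then have "inv \<pi> y \<noteq> y" by auto
  then have "y \<in> S" using permutes_not_in[OF permutes_inv[OF \<pi>(1)]] by blast
  then show "\<exists>i<length (UV ops P). K' = K1 \<and> (y = xor (snd (UV ops P ! i)) K2 \<or> y = E K1 (xor (fst (UV ops P ! i)) K2))"
    unfolding S_def
  proof
    assume "y \<in> snd ` set L"
    then obtain z where z: "z \<in> set L" "y = snd z" by auto
    obtain i where i: "i < length (UV ops P)" "z = (xor (fst (UV ops P ! i)) K2, xor (snd (UV ops P ! i)) K2)"
      using set_shiftL_nth[OF z(1)[unfolded L_def]] by blast
    then show ?thesis using z(2) K' by auto
  next
    assume "y \<in> \<sigma> ` fst ` set L"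
    then obtain z where z: "z \<in> set L" "y = \<sigma> (fst z)" by auto
    obtain i where i: "i < length (UV ops P)" "z = (xor (fst (UV ops P ! i)) K2, xor (snd (UV ops P ! i)) K2)"
      using set_shiftL_nth[OF z(1)[unfolded L_def]] by blast
    then show ?thesis using z(2) K' unfolding \<sigma>_def by auto
  qed
qed


lemma num_classical_UV: "length (UV ops P) = num_classical ops"
  by (simp add: UV_def num_classical_def isCl_def[abs_def])

lemma card_bits: "card (bits n) = 2^n" by (simp add: bits_def)

lemma dq_generic:
  assumes "finite KS" "(\<Sum>K\<in>KS. mass k n (D K) \<phi>) \<le> B"
  shows "(\<Sum>K\<in>KS. 2 * sqrt (mass k n (D K) \<phi>)) \<le> 2 * sqrt (real (card KS)) * sqrt B"
proof -
  have "(\<Sum>K\<in>KS. sqrt (mass k n (D K) \<phi>)) \<le> sqrt (real (card KS)) * sqrt (\<Sum>K\<in>KS. mass k n (D K) \<phi>)"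
    by (rule cauchy_sqrt[OF assms(1)]) (rule mass_nonneg)
  also have "\<dots> \<le> sqrt (real (card KS)) * sqrt B"
    by (rule mult_left_mono) (use assms(2) in auto)
  finally show ?thesis by (simp add: sum_distrib_left[symmetric])
qed

lemma mass_sum_bound:
  fixes \<phi> :: "('w::finite) qstate"
  assumes nphi: "nrm k n \<phi> = 1"
    and cond: "\<And>K1 K2. K1 \<in> bits k \<Longrightarrow> K2 \<in> bits n \<Longrightarrow>
        \<forall>K x. D (K1, K2) K x \<longrightarrow> (\<exists>i<l. K = K1 \<and> (x = f K1 K2 i \<or> x = g K1 K2 i))"
    and bf: "\<And>K1 i. K1 \<in> bits k \<Longrightarrow> i < l \<Longrightarrow> bij_betw (\<lambda>K2. f K1 K2 i) (bits n) (bits n)"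
    and bg: "\<And>K1 i. K1 \<in> bits k \<Longrightarrow> i < l \<Longrightarrow> bij_betw (\<lambda>K2. g K1 K2 i) (bits n) (bits n)"
  shows "(\<Sum>K\<in>bits k \<times> bits n. mass k n (D K) \<phi>) \<le> 2 * real l"
proof -
  have "(\<Sum>K\<in>bits k \<times> bits n. mass k n (D K) \<phi>) = (\<Sum>K1\<in>bits k. \<Sum>K2\<in>bits n. mass k n (D (K1, K2)) \<phi>)"
    by (simp add: sum.cartesian_product)
  also have "\<dots> \<le> (\<Sum>K1\<in>bits k. \<Sum>K2\<in>bits n. \<Sum>i<l. mpt k n K1 (f K1 K2 i) \<phi> + mpt k n K1 (g K1 K2 i) \<phi>)"
    by (intro sum_mono mass_union_list cond)
  also have "\<dots> = (\<Sum>K1\<in>bits k. \<Sum>i<l. \<Sum>K2\<in>bits n. mpt k n K1 (f K1 K2 i) \<phi> + mpt k n K1 (g K1 K2 i) \<phi>)"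
    by (intro sum.cong refl sum.swap)
  also have "\<dots> = (\<Sum>i<l. \<Sum>K1\<in>bits k. \<Sum>K2\<in>bits n. mpt k n K1 (f K1 K2 i) \<phi> + mpt k n K1 (g K1 K2 i) \<phi>)"
    by (rule sum.swap)
  also have "\<dots> = (\<Sum>i<l. (\<Sum>K1\<in>bits k. \<Sum>K2\<in>bits n. mpt k n K1 (f K1 K2 i) \<phi>) + (\<Sum>K1\<in>bits k. \<Sum>K2\<in>bits n. mpt k n K1 (g K1 K2 i) \<phi>))"
    by (simp add: sum.distrib)
  also have "\<dots> = (\<Sum>i<l. 2)"
  proof (rule sum.cong[OF refl])
    fix i assume i: "i \<in> {..<l}"
    have "(\<Sum>K1\<in>bits k. \<Sum>K2\<in>bits n. mpt k n K1 (f K1 K2 i) \<phi>) = 1"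
      by (rule sum_mpt_bij[OF _ nphi]) (use bf i in auto)
    moreover have "(\<Sum>K1\<in>bits k. \<Sum>K2\<in>bits n. mpt k n K1 (g K1 K2 i) \<phi>) = 1"
      by (rule sum_mpt_bij[OF _ nphi]) (use bg i in auto)
    ultimately show "(\<Sum>K1\<in>bits k. \<Sum>K2\<in>bits n. mpt k n K1 (f K1 K2 i) \<phi>) + (\<Sum>K1\<in>bits k. \<Sum>K2\<in>bits n. mpt k n K1 (g K1 K2 i) \<phi>) = 2"
      by simp
  qed
  also have "\<dots> = 2 * real l" by simp
  finally show ?thesis .
qed

lemma dq_sum:
  fixes \<phi> :: "('w::finite) qstate" and ops :: "'w op list"
  assumes E: "E \<in> Ics k n" and P: "P \<in> Perms n" and wf: "\<forall>c\<in>set ops. wfop k n c" and nphi: "nrm k n \<phi> = 1"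
  shows "(\<Sum>K\<in>bits k \<times> bits n. dq k n E (Phi (fst K) (snd K) ops E P) c \<phi>)
           \<le> 2 * sqrt (2^k * 2^n) * sqrt (2 * real (num_classical ops))"
proof -
  define l where "l = length (UV ops P)"
  define U where "U = UV ops P"
  have pp: "P permutes bits n" using P by (simp add: Perms_def)
  have Ult: "fst (U ! i) < 2^n" "snd (U ! i) < 2^n" if "i < l" for i
    using UV_lt[OF pp wf, of "U ! i"] that unfolding l_def U_def by auto
  have Ep: "E K1 permutes bits n" if "K1 \<in> bits k" for K1 using Ics_perm[OF E] that by (simp add: bits_iff)
  have cardKS: "real (card (bits k \<times> bits n)) = 2^k * 2^n" by (simp add: card_cartesian_product card_bits)
  have lq: "l = num_classical ops" unfolding l_def by (rule num_classical_UV)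
  show ?thesis
  proof (cases c)
    case QueryE
    have "(\<Sum>K\<in>bits k \<times> bits n. mass k n ((\<lambda>K. \<lambda>K' x. Phi (fst K) (snd K) ops E P K' x \<noteq> E K' x) K) \<phi>) \<le> 2 * real l"
    proof (rule mass_sum_bound[OF nphi, where f="\<lambda>K1 K2 i. xor (fst (U ! i)) K2" and g="\<lambda>K1 K2 i. inv (E K1) (xor (snd (U ! i)) K2)"])
      fix K1 K2 assume "K1 \<in> bits k" "K2 \<in> bits n"
      show "\<forall>K x. (\<lambda>K' x. Phi (fst (K1, K2)) (snd (K1, K2)) ops E P K' x \<noteq> E K' x) K x \<longrightarrow>
          (\<exists>i<l. K = K1 \<and> (x = xor (fst (U ! i)) K2 \<or> x = inv (E K1) (xor (snd (U ! i)) K2)))"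
        using fwd_cond[of E K1 n K2 ops P] Ep[OF \<open>K1 \<in> bits k\<close>] unfolding l_def U_def by simp
    next
      fix K1 i assume "K1 \<in> bits k" "i < l"
      show "bij_betw (\<lambda>K2. xor (fst (U ! i)) K2) (bits n) (bits n)" by (rule bij_xor[OF Ult(1)[OF \<open>i < l\<close>]])
      show "bij_betw (\<lambda>K2. inv (E K1) (xor (snd (U ! i)) K2)) (bits n) (bits n)"
        by (rule bij_perm_xor[OF permutes_inv[OF Ep[OF \<open>K1 \<in> bits k\<close>]] Ult(2)[OF \<open>i < l\<close>]])
    qed
    then have "(\<Sum>K\<in>bits k \<times> bits n. 2 * sqrt (mass k n ((\<lambda>K. \<lambda>K' x. Phi (fst K) (snd K) ops E P K' x \<noteq> E K' x) K) \<phi>))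
        \<le> 2 * sqrt (real (card (bits k \<times> bits n))) * sqrt (2 * real l)"
      by (intro dq_generic) auto
    then show ?thesis using QueryE cardKS lq by (simp add: dq_def)
  next
    case QueryEinv
    have "(\<Sum>K\<in>bits k \<times> bits n. mass k n ((\<lambda>K. \<lambda>K' x. inv (Phi (fst K) (snd K) ops E P K') x \<noteq> inv (E K') x) K) \<phi>) \<le> 2 * real l"
    proof (rule mass_sum_bound[OF nphi, where f="\<lambda>K1 K2 i. xor (snd (U ! i)) K2" and g="\<lambda>K1 K2 i. E K1 (xor (fst (U ! i)) K2)"])
      fix K1 K2 assume "K1 \<in> bits k" "K2 \<in> bits n"
      show "\<forall>K x. (\<lambda>K' x. inv (Phi (fst (K1, K2)) (snd (K1, K2)) ops E P K') x \<noteq> inv (E K') x) K x \<longrightarrow>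
          (\<exists>i<l. K = K1 \<and> (x = xor (snd (U ! i)) K2 \<or> x = E K1 (xor (fst (U ! i)) K2)))"
        using inv_cond[of E K1 n K2 ops P] Ep[OF \<open>K1 \<in> bits k\<close>] unfolding l_def U_def by simp
    next
      fix K1 i assume "K1 \<in> bits k" "i < l"
      show "bij_betw (\<lambda>K2. xor (snd (U ! i)) K2) (bits n) (bits n)" by (rule bij_xor[OF Ult(2)[OF \<open>i < l\<close>]])
      show "bij_betw (\<lambda>K2. E K1 (xor (fst (U ! i)) K2)) (bits n) (bits n)"
        by (rule bij_perm_xor[OF Ep[OF \<open>K1 \<in> bits k\<close>] Ult(1)[OF \<open>i < l\<close>]])
    qed
    then have "(\<Sum>K\<in>bits k \<times> bits n. 2 * sqrt (mass k n ((\<lambda>K. \<lambda>K' x. inv (Phi (fst K) (snd K) ops E P K') x \<noteq> inv (E K') x) K) \<phi>))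
        \<le> 2 * sqrt (real (card (bits k \<times> bits n))) * sqrt (2 * real l)"
      by (intro dq_generic) auto
    then show ?thesis using QueryEinv cardKS lq by (simp add: dq_def)
  qed (simp_all add: dq_def)
qed

lemma Bnd_sum:
  fixes cs :: "('w::finite) op list"
  assumes good: "good k n E Ev Inv" and fin: "finite KS"
    and dqb: "\<And>(\<phi>::'w qstate) (c::'w op). nrm k n \<phi> = 1 \<Longrightarrow> c = QueryE \<or> c = QueryEinv \<Longrightarrow> (\<Sum>K\<in>KS. dq k n E (E' K) c \<phi>) \<le> B"
  shows "\<forall>c\<in>set cs. wfop k n c \<Longrightarrow> nrm k n \<phi> = 1 \<Longrightarrow> (\<Sum>K\<in>KS. Bnd k n E (E' K) Ev Inv cs \<phi>) \<le> real (num_quantum cs) * B"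
proof (induction cs arbitrary: \<phi>)
  case Nil then show ?case by (simp add: num_quantum_def)
next
  case (Cons c cs)
  have wc: "wfop k n c" using Cons.prems by simp
  have n1: "nrm k n (step k n E Ev Inv c \<phi>) = 1" using nrm_step[OF good wc] Cons.prems by simp
  have IH: "(\<Sum>K\<in>KS. Bnd k n E (E' K) Ev Inv cs (step k n E Ev Inv c \<phi>)) \<le> real (num_quantum cs) * B"
    using Cons.IH[OF _ n1] Cons.prems by simp
  have nq: "num_quantum (c # cs) = (if c = QueryE \<or> c = QueryEinv then 1 else 0) + num_quantum cs"
    by (simp add: num_quantum_def)
  have "(\<Sum>K\<in>KS. Bnd k n E (E' K) Ev Inv (c # cs) \<phi>)
      = (\<Sum>K\<in>KS. dq k n E (E' K) c \<phi>) + (\<Sum>K\<in>KS. Bnd k n E (E' K) Ev Inv cs (step k n E Ev Inv c \<phi>))"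
    by (simp add: sum.distrib)
  also have "\<dots> \<le> (if c = QueryE \<or> c = QueryEinv then B else 0) + real (num_quantum cs) * B"
  proof (cases "c = QueryE \<or> c = QueryEinv")
    case True
    then show ?thesis using dqb[OF Cons.prems(2) True] IH by simp
  next
    case False
    then have "dq k n E (E' K) c \<phi> = 0" for K by (cases c) (auto simp: dq_def)
    then show ?thesis using False IH by simp
  qed
  also have "\<dots> = real (num_quantum (c # cs)) * B" unfolding nq by (simp add: algebra_simps)
  finally show ?case .
qed

lemma nrm_run: "good k n E Ev Inv \<Longrightarrow> \<forall>c\<in>set ops. wfop k n c \<Longrightarrow> nrm k n (run k n E Ev Inv ops \<psi>) = nrm k n \<psi>"
proof (induction ops arbitrary: \<psi>)
  case Nil then show ?case by (simp add: run_def)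
next
  case (Cons c cs)
  have wc: "wfop k n c" using Cons.prems by simp
  have "nrm k n (run k n E Ev Inv (c # cs) \<psi>) = nrm k n (run k n E Ev Inv cs (step k n E Ev Inv c \<psi>))"
    by (simp add: run_def)
  also have "\<dots> = nrm k n (step k n E Ev Inv c \<psi>)" using Cons by simp
  also have "\<dots> = nrm k n \<psi>" by (rule nrm_step[OF Cons.prems(1) wc])
  finally show ?case .
qed

lemma nrm_init: "nrm k n (init_state w0 :: ('w::finite) qstate) = 1"
proof -
  have m: "(0, 0, 0, w0) \<in> valid k n" by (simp add: valid_def)
  have "(\<Sum>b\<in>valid k n. (cmod (init_state w0 b))^2) = (\<Sum>b\<in>valid k n. if b = (0,0,0,w0) then 1 else 0)"
    by (intro sum.cong refl) (simp add: init_state_def)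
  also have "\<dots> = 1" using m by simp
  finally show ?thesis unfolding nrm_def L2_set_def by simp
qed

lemma good_Ics: "E \<in> Ics k n \<Longrightarrow> P permutes bits n \<Longrightarrow> good k n E P (inv P)"
  unfolding good_def by (auto intro: perm_lt perm_inv_lt Ics_perm)


lemma final_arith:
  fixes p q :: nat
  shows "real p * (2 * sqrt (2^k * 2^n) * sqrt (2 * real q)) = 2^k * 2^n * sqrt (8 * real p ^ 2 * real q / 2 ^ (k + n))"
proof -
  define N :: real where "N = 2^k * 2^n"
  have Npos: "N > 0" unfolding N_def by simp
  have N2: "(2::real)^(k+n) = N" unfolding N_def by (simp add: power_add)
  have e8: "8 * real p ^ 2 * real q = (2 * real p)^2 * (2 * real q)" by (simp add: power2_eq_square)
  have s: "sqrt (8 * real p ^ 2 * real q / 2 ^ (k + n)) = 2 * real p * sqrt (2 * real q) / sqrt N"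
  proof -
    have "sqrt ((2 * real p)^2 * (2 * real q) / N) = sqrt ((2 * real p)^2) * sqrt (2 * real q) / sqrt N"
      by (simp only: real_sqrt_divide real_sqrt_mult)
    also have "sqrt ((2 * real p)^2) = 2 * real p" by (rule real_sqrt_unique) auto
    finally show ?thesis unfolding N2 e8 .
  qed
  have "N * sqrt (8 * real p ^ 2 * real q / 2 ^ (k + n)) = 2 * real p * sqrt (2 * real q) * (N / sqrt N)"
    unfolding s by simp
  also have "N / sqrt N = sqrt N" using Npos by (simp add: real_div_sqrt)
  finally show ?thesis unfolding N_def[symmetric] by (simp add: mult_ac)
qed

lemma EP_bound:
  fixes ops :: "('w::finite) op list" and w0 :: 'w
  assumes E: "E \<in> Ics k n" and P: "P \<in> Perms n" and wf: "\<forall>c\<in>set ops. wfop k n c"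
    and p: "num_quantum ops \<le> p" and q: "num_classical ops \<le> q"
  shows "(\<Sum>K1\<in>bits k. \<Sum>K2\<in>bits n. accept_prob k n (Phi K1 K2 ops E P) P (inv P) w0 ops acc
            - accept_prob k n E P (inv P) w0 ops acc)
         \<le> 2^k * 2^n * sqrt (8 * real p ^ 2 * real q / 2 ^ (k + n))"
proof -
  define KS where "KS = bits k \<times> bits n"
  define \<psi>0 where "\<psi>0 = (init_state w0 :: 'w qstate)"
  define E' where "E' K = Phi (fst K) (snd K) ops E P" for K
  have pp: "P permutes bits n" using P by (simp add: Perms_def)
  have gE: "good k n E P (inv P)" by (rule good_Ics[OF E pp])
  have E'I: "E' K \<in> Ics k n" if "K \<in> KS" for K
  proof -
    have K1: "fst K < 2^k" and K2: "snd K < 2^n" using that by (auto simp: KS_def bits_iff)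
    show ?thesis unfolding E'_def Phi_def
      by (rule Ics_upd[OF E K1 Fix_permutes[OF inb_shift[OF pp wf K2] Ics_perm[OF E K1]]])
  qed
  have gE': "good k n (E' K) P (inv P)" if "K \<in> KS" for K by (rule good_Ics[OF E'I[OF that] pp])
  have n0: "nrm k n \<psi>0 = 1" unfolding \<psi>0_def by (rule nrm_init)
  have diff: "accept_prob k n (E' K) P (inv P) w0 ops acc - accept_prob k n E P (inv P) w0 ops acc
      \<le> Bnd k n E (E' K) P (inv P) ops \<psi>0" if K: "K \<in> KS" for K
  proof -
    have "accept_prob k n (E' K) P (inv P) w0 ops acc - accept_prob k n E P (inv P) w0 ops acc
        \<le> nrm k n (\<lambda>b. run k n (E' K) P (inv P) ops \<psi>0 b - run k n E P (inv P) ops \<psi>0 b)"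
      unfolding accept_prob_def \<psi>0_def[symmetric]
      by (rule acc_diff) (use nrm_run[OF gE' [OF K] wf] nrm_run[OF gE wf] n0 in auto)
    also have "\<dots> \<le> nrm k n (\<lambda>b. \<psi>0 b - \<psi>0 b) + Bnd k n E (E' K) P (inv P) ops \<psi>0"
      by (rule hybrid[OF gE gE'[OF K] wf])
    also have "nrm k n (\<lambda>b. \<psi>0 b - \<psi>0 b) = 0" using nrm_zero by simp
    finally show ?thesis by simp
  qed
  have "(\<Sum>K1\<in>bits k. \<Sum>K2\<in>bits n. accept_prob k n (Phi K1 K2 ops E P) P (inv P) w0 ops acc
            - accept_prob k n E P (inv P) w0 ops acc)
      = (\<Sum>K\<in>KS. accept_prob k n (E' K) P (inv P) w0 ops acc - accept_prob k n E P (inv P) w0 ops acc)"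
    unfolding KS_def E'_def by (simp add: sum.cartesian_product case_prod_beta)
  also have "\<dots> \<le> (\<Sum>K\<in>KS. Bnd k n E (E' K) P (inv P) ops \<psi>0)"
    by (rule sum_mono) (rule diff)
  also have "\<dots> \<le> real (num_quantum ops) * (2 * sqrt (2^k * 2^n) * sqrt (2 * real (num_classical ops)))"
  proof (rule Bnd_sum[OF gE _ _ wf n0])
    show "finite KS" by (simp add: KS_def)
    fix \<phi> :: "'w qstate" and c :: "'w op"
    assume "nrm k n \<phi> = 1"
    then show "(\<Sum>K\<in>KS. dq k n E (E' K) c \<phi>) \<le> 2 * sqrt (2^k * 2^n) * sqrt (2 * real (num_classical ops))"
      unfolding KS_def E'_def by (rule dq_sum[OF E P wf])
  qed
  also have "\<dots> \<le> real p * (2 * sqrt (2^k * 2^n) * sqrt (2 * real q))"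
    using p q by (intro mult_mono) (auto intro!: mult_left_mono)
  also have "\<dots> = 2^k * 2^n * sqrt (8 * real p ^ 2 * real q / 2 ^ (k + n))" by (rule final_arith)
  finally show ?thesis .
qed


theorem theorem2:
  fixes k n p q :: nat
    and w0 :: "'w::finite"
    and ops :: "'w op list"
    and acc :: "'w basis \<Rightarrow> bool"
  assumes "wf_adv k n ops"
    and "num_quantum ops \<le> p"
    and "num_classical ops \<le> q"
  shows "adv_sprp_na_FX k n w0 ops acc \<le> sqrt (8 * real p ^ 2 * real q / 2 ^ (k + n))"
proof -
  have wf: "\<forall>c\<in>set ops. wfop k n c" using assms(1) by (simp add: wf_adv_wfop)
  define Bd where "Bd = sqrt (8 * real p ^ 2 * real q / 2 ^ (k + n))"
  define I where "I = real (card (Ics k n))"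
  define M where "M = real (card (Perms n))"
  define N :: real where "N = 2^k * 2^n"
  define AR where "AR E K1 K2 = accept_prob k n E (FX E K1 K2) (FX_inv E K1 K2) w0 ops acc" for E K1 K2
  define AP where "AP K1 K2 P E = accept_prob k n (Phi K1 K2 ops E P) P (inv P) w0 ops acc" for K1 K2 P E
  define AI where "AI E P = accept_prob k n E P (inv P) w0 ops acc" for E P
  have Ipos: "I > 0"
  proof -
    have "(\<lambda>_. id) \<in> Ics k n" by (simp add: Ics_def)
    then show ?thesis unfolding I_def using finite_Ics card_gt_0_iff by fastforce
  qed
  have Mpos: "M > 0"
  proof -
    have "id \<in> Perms n" by (simp add: Perms_def)
    then show ?thesis unfolding M_def using finite_Perms card_gt_0_iff by fastforce
  qed
  have Npos: "N > 0" unfolding N_def by simp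
  define R where "R = (\<Sum>E\<in>Ics k n. \<Sum>K1\<in>bits k. \<Sum>K2\<in>bits n. AR E K1 K2)"
  define Id where "Id = (\<Sum>E\<in>Ics k n. \<Sum>P\<in>Perms n. AI E P)"
  have adv_eq: "adv_sprp_na_FX k n w0 ops acc = R / (I * N) - Id / (I * M)"
    unfolding adv_sprp_na_FX_def R_def Id_def AR_def AI_def I_def M_def N_def by (simp add: mult.assoc)
  have hR: "R * M = (\<Sum>K1\<in>bits k. \<Sum>K2\<in>bits n. \<Sum>P\<in>Perms n. \<Sum>E\<in>Ics k n. AP K1 K2 P E)"
  proof -
    have "R = (\<Sum>K1\<in>bits k. \<Sum>E\<in>Ics k n. \<Sum>K2\<in>bits n. AR E K1 K2)"
      unfolding R_def by (rule sum.swap)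
    also have "\<dots> = (\<Sum>K1\<in>bits k. \<Sum>K2\<in>bits n. \<Sum>E\<in>Ics k n. AR E K1 K2)"
      by (rule sum.cong[OF refl], rule sum.swap)
    finally have "R * M = (\<Sum>K1\<in>bits k. \<Sum>K2\<in>bits n. M * (\<Sum>E\<in>Ics k n. AR E K1 K2))"
      by (simp add: sum_distrib_left mult.commute)
    also have "\<dots> = (\<Sum>K1\<in>bits k. \<Sum>K2\<in>bits n. \<Sum>P\<in>Perms n. \<Sum>E\<in>Ics k n. AP K1 K2 P E)"
    proof (intro sum.cong refl)
      fix K1 K2 assume "K1 \<in> bits k" "K2 \<in> bits n"
      then have "K1 < 2^k" "K2 < 2^n" by (auto simp: bits_iff)
      show "M * (\<Sum>E\<in>Ics k n. AR E K1 K2) = (\<Sum>P\<in>Perms n. \<Sum>E\<in>Ics k n. AP K1 K2 P E)"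
        unfolding M_def AR_def AP_def by (rule coupling[OF \<open>K1 < 2^k\<close> \<open>K2 < 2^n\<close> wf])
    qed
    finally show ?thesis .
  qed
  have hI: "Id * N = (\<Sum>K1\<in>bits k. \<Sum>K2\<in>bits n. \<Sum>P\<in>Perms n. \<Sum>E\<in>Ics k n. AI E P)"
  proof -
    have "Id = (\<Sum>P\<in>Perms n. \<Sum>E\<in>Ics k n. AI E P)" unfolding Id_def by (rule sum.swap)
    then show ?thesis by (simp add: N_def card_bits)
  qed
  have "R * M - Id * N = (\<Sum>K1\<in>bits k. \<Sum>K2\<in>bits n. \<Sum>P\<in>Perms n. \<Sum>E\<in>Ics k n. AP K1 K2 P E - AI E P)"
    unfolding hR hI by (simp add: sum_subtractf)
  also have "\<dots> = (\<Sum>K1\<in>bits k. \<Sum>P\<in>Perms n. \<Sum>K2\<in>bits n. \<Sum>E\<in>Ics k n. AP K1 K2 P E - AI E P)"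
    by (rule sum.cong[OF refl], rule sum.swap)
  also have "\<dots> = (\<Sum>P\<in>Perms n. \<Sum>K1\<in>bits k. \<Sum>K2\<in>bits n. \<Sum>E\<in>Ics k n. AP K1 K2 P E - AI E P)"
    by (rule sum.swap)
  also have "\<dots> = (\<Sum>P\<in>Perms n. \<Sum>K1\<in>bits k. \<Sum>E\<in>Ics k n. \<Sum>K2\<in>bits n. AP K1 K2 P E - AI E P)"
    by (rule sum.cong[OF refl], rule sum.cong[OF refl], rule sum.swap)
  also have "\<dots> = (\<Sum>P\<in>Perms n. \<Sum>E\<in>Ics k n. \<Sum>K1\<in>bits k. \<Sum>K2\<in>bits n. AP K1 K2 P E - AI E P)"
    by (rule sum.cong[OF refl], rule sum.swap)
  also have "\<dots> \<le> (\<Sum>P\<in>Perms n. \<Sum>E\<in>Ics k n. N * Bd)"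
  proof (intro sum_mono)
    fix P E assume "P \<in> Perms n" "E \<in> Ics k n"
    show "(\<Sum>K1\<in>bits k. \<Sum>K2\<in>bits n. AP K1 K2 P E - AI E P) \<le> N * Bd"
      unfolding AP_def AI_def N_def Bd_def
      by (rule EP_bound[OF \<open>E \<in> Ics k n\<close> \<open>P \<in> Perms n\<close> wf assms(2,3)])
  qed
  also have "\<dots> = M * I * N * Bd" by (simp add: M_def I_def)
  finally have main: "R * M - Id * N \<le> M * I * N * Bd" .
  have "R / (I * N) - Id / (I * M) = (R * M - Id * N) / (I * M * N)"
    using Ipos Mpos Npos by (simp add: field_simps)
  also have "\<dots> \<le> (M * I * N * Bd) / (I * M * N)"
    by (rule divide_right_mono[OF main]) (use Ipos Mpos Npos in simp)
  also have "\<dots> = Bd" using Ipos Mpos Npos by (simp add: field_simps)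
  finally show ?thesis unfolding adv_eq Bd_def .
qed

end
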